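(* Let $n$ be a positive integer, $q=2^n$, $k$ an integer with $1\le k\le n-1$ and $k\notin\{n/3,2n/3\}$, $d=\gcd(n,k)$, and assume $n/d$ is odd. For $\alpha,\beta,\gamma\in\mathbb{F}_q$ let $$S(\alpha,\beta,\gamma)=\sum_{x\in\mathbb{F}_q}(-1)^{\mathrm{Tr}_1^n\left(\alpha x^{2^{2k}+1}+\beta x^{2^k+1}+\gamma x\right)}.$$ Let $\pi$ be a primitive element of $\mathbb{F}_q$ and let $\mathcal{C}$ be the binary cyclic code of length $q-1$ with parity-check polynomial $h_1(x)h_2(x)h_3(x)$, where $h_1,h_2,h_3$ are the minimal polynomials over $\mathbb{F}_2$ of $\pi^{-1},\pi^{-(2^k+1)},\pi^{-(2^{2k}+1)}$; its codewords are $c(\alpha,\beta,\gamma)=(c_0,\dots,c_{q-2})$ with $c_i=\mathrm{Tr}_1^n(\alpha\pi^{i(2^{2k}+1)}+\beta\pi^{i(2^k+1)}+\gamma\pi^i)$ for $(\alpha,\beta,\gamma)\in\mathbb{F}_q^3$, and the Hamming weight of $c(\alpha,\beta,\gamma)$ is $2^{n-1}-\tfrac12 S(\alpha,\beta,\gamma)$. Then, as $(\alpha,\beta,\gamma)$ runs over $\mathbb{F}_q^3$, the value $S(\alpha,\beta,\gamma)$ (with corresponding weight of $c(\alpha,\beta,\gamma)$) takes the following values with the following multiplicities: - $2^{(n+d)/2}$ (weight $2^{n-1}-2^{(n+d-2)/2}$): $\frac{(2^{n-d-1}+2^{(n-d-2)/2})(2^n-1)(2^{n+2d}-2^n-2^{n-d}+2^{2d})}{2^{2d}-1}$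 times; - $-2^{(n+d)/2}$ (weight $2^{n-1}+2^{(n+d-2)/2}$): $\frac{(2^{n-d-1}-2^{(n-d-2)/2})(2^n-1)(2^{n+2d}-2^n-2^{n-d}+2^{2d})}{2^{2d}-1}$ times; - $2^{(n+3d)/2}$ (weight $2^{n-1}-2^{(n+3d-2)/2}$): $\frac{(2^{n-3d-1}+2^{(n-3d-2)/2})(2^{n-d}-1)(2^n-1)}{2^{2d}-1}$ times; - $-2^{(n+3d)/2}$ (weight $2^{n-1}+2^{(n+3d-2)/2}$): $\frac{(2^{n-3d-1}-2^{(n-3d-2)/2})(2^{n-d}-1)(2^n-1)}{2^{2d}-1}$ times; - $0$ (weight $2^{n-1}$): $(2^n-1)(2^{2n}-2^{2n-d}+2^{2n-4d}+2^n-2^{n-d}-2^{n-3d}+1)$ times; - $2^n$ (weight $0$): $1$ time.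
   Context: $\mathrm{Tr}_1^n:\mathbb{F}_{2^n}\to\mathbb{F}_2$ is the absolute trace $x\mapsto\sum_{i=0}^{n-1}x^{2^i}$. *)

theory Defs
  imports Complex_Main "HOL-Library.Cardinality"
begin

text \<open>Absolute trace from F_{2^n} to F_2 (values 0 or 1 inside the field).\<close>
definition tr :: "nat \<Rightarrow> 'a::field \<Rightarrow> 'a" where
  "tr n x = (\<Sum>i<n. x ^ (2 ^ i))"

definition sgn2 :: "'a::field \<Rightarrow> int" where
  "sgn2 y = (if y = 0 then 1 else -1)"

definition S_sum :: "nat \<Rightarrow> nat \<Rightarrow> 'a::{field,finite} \<Rightarrow> 'a \<Rightarrow> 'a \<Rightarrow> int" where
  "S_sum n k \<alpha> \<beta> \<gamma> =
     (\<Sum>x\<in>(UNIV::'a set).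
        sgn2 (tr n (\<alpha> * x ^ (2^(2*k) + 1) + \<beta> * x ^ (2^k + 1) + \<gamma> * x)))"

definition primitive_elem :: "'a::field \<Rightarrow> bool" where
  "primitive_elem p \<longleftrightarrow> (\<forall>x. x \<noteq> 0 \<longrightarrow> (\<exists>i::nat. x = p ^ i))"

definition cw :: "nat \<Rightarrow> nat \<Rightarrow> 'a::field \<Rightarrow> 'a \<Rightarrow> 'a \<Rightarrow> 'a \<Rightarrow> nat \<Rightarrow> 'a" where
  "cw n k p \<alpha> \<beta> \<gamma> i =
     tr n (\<alpha> * p ^ (i * (2^(2*k) + 1)) + \<beta> * p ^ (i * (2^k + 1)) + \<gamma> * p ^ i)"

definition cw_weight :: "nat \<Rightarrow> nat \<Rightarrow> 'a::field \<Rightarrow> 'a \<Rightarrow> 'a \<Rightarrow> 'a \<Rightarrow> nat" where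
  "cw_weight n k p \<alpha> \<beta> \<gamma> = card {i. i < 2^n - 1 \<and> cw n k p \<alpha> \<beta> \<gamma> i \<noteq> 0}"

end

theory Submission
  imports Defs "HOL-Number_Theory.Residues" "HOL-Computational_Algebra.Computational_Algebra"
begin

locale gf =
  fixes n :: nat and p :: "'a::{field,finite}"
  assumes n_pos: "0 < n" and card_q: "CARD('a) = 2 ^ n"
begin

lemma char2: "CHAR('a) = 2"
proof -
  have pos: "CHAR('a) > 0" by (rule finite_imp_CHAR_pos) simp
  have pr: "prime CHAR('a)" using prime_CHAR_semidom[OF pos] .
  have "CHAR('a) dvd 2 ^ n" using CHAR_dvd_CARD[where 'a='a] card_q by simp
  hence "CHAR('a) dvd 2" using pr prime_dvd_power by blast
  thus ?thesis using pr by (metis prime_nat_iff two_is_prime_nat prime_gt_1_nat less_irrefl)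
qed

lemma two_zero[simp]: "(2::'a) = 0"
  using of_nat_CHAR[where 'a='a] char2 by simp

lemma add_self[simp]: "(x::'a) + x = 0"
  by (metis mult_2 two_zero mult_zero_left)

lemma minus_eq[simp]: "- (x::'a) = x"
  by (metis add_self add.inverse_unique)

lemma diff_eq_add: "(x::'a) - y = x + y"
  by (simp add: diff_conv_add_uminus)

lemma frob_add: "((x::'a) + y) ^ (2 ^ j) = x ^ (2 ^ j) + y ^ (2 ^ j)"
  using freshmans_dream'[of "2 ^ j" j x y] char2 by simp

lemma frob_sum: "(sum (f::'b \<Rightarrow> 'a) A) ^ (2 ^ j) = (\<Sum>i\<in>A. f i ^ (2 ^ j))"
  using freshmans_dream_sum'[of "2 ^ j" j f A] char2 by simp

lemma fermat: "(x::'a) ^ (2 ^ n) = x"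
proof (cases "x = 0")
  case False
  have "x * (\<Prod>y\<in>UNIV-{0}. x * y) = x * x ^ (card (UNIV :: 'a set) - 1) * \<Prod>(UNIV-{0})"
    by (simp add: prod.distrib mult_ac)
  also have "x * x ^ (card (UNIV :: 'a set) - 1) = x ^ Suc (card (UNIV :: 'a set) - 1)"
    by (subst power_Suc) auto
  also have "Suc (card (UNIV :: 'a set) - 1) = card (UNIV :: 'a set)"
    using finite_UNIV_card_ge_0[where ?'a = 'a] by simp
  also have "(\<Prod>y\<in>UNIV-{0}. x * y) = (\<Prod>y\<in>UNIV-{0}. y)"
    by (rule prod.reindex_bij_witness[of _ "\<lambda>y. y / x" "\<lambda>y. x * y"]) (use False in auto)
  finally show ?thesis
    using card_q by simp
qed (use n_pos in auto)

lemma pow2_pow2: "((x::'a) ^ (2 ^ a)) ^ (2 ^ b) = x ^ (2 ^ (a + b))"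
  by (simp add: power_mult power_add)

lemma fermat_mult: "(x::'a) ^ (2 ^ (n * j)) = x"
proof (induction j)
  case (Suc j)
  have "x ^ (2 ^ (n * Suc j)) = (x ^ (2 ^ (n * j))) ^ (2 ^ n)"
    by (simp add: pow2_pow2 add.commute)
  thus ?case using Suc fermat by simp
qed simp

lemma fermat_mod: "(x::'a) ^ (2 ^ j) = x ^ (2 ^ (j mod n))"
proof -
  have "x ^ (2 ^ j) = (x ^ (2 ^ (n * (j div n)))) ^ (2 ^ (j mod n))"
    by (simp add: pow2_pow2)
  thus ?thesis using fermat_mult by simp
qed

lemma frob_inj: "((x::'a) ^ (2 ^ j) = y ^ (2 ^ j)) \<longleftrightarrow> x = y"
proof
  assume "x ^ (2 ^ j) = y ^ (2 ^ j)"
  hence "(x + y) ^ (2 ^ j) = 0" by (simp add: frob_add)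
  hence "x + y = 0" by simp
  thus "x = y" by (metis add_self add_left_cancel)
qed simp

lemma frob_zero_iff[simp]: "((x::'a) ^ (2 ^ j) = 0) \<longleftrightarrow> x = 0"
  by simp


abbreviation Tr :: "'a \<Rightarrow> 'a" where "Tr x \<equiv> tr n x"

definition trd :: "nat \<Rightarrow> nat \<Rightarrow> 'a \<Rightarrow> 'a" where
  "trd d N x = (\<Sum>i<N. x ^ (2 ^ (d * i)))"

lemma tr_trd: "Tr x = trd 1 n x"
  by (simp add: tr_def trd_def)

lemma pow_fix_mult: assumes "(c::'a) ^ (2 ^ d) = c" shows "c ^ (2 ^ (d * i)) = c"
proof (induction i)
  case (Suc i)
  have "c ^ (2 ^ (d * Suc i)) = (c ^ (2 ^ (d * i))) ^ (2 ^ d)"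
    by (simp add: pow2_pow2 add.commute)
  thus ?case using Suc assms by simp
qed simp

lemma trd_frob: assumes "d * N = n" shows "trd d N (x ^ (2 ^ d)) = trd d N x"
proof -
  define f where "f i = x ^ (2 ^ (d * i))" for i
  have fS: "(x ^ (2 ^ d)) ^ (2 ^ (d * i)) = f (Suc i)" for i
    by (simp add: f_def pow2_pow2)
  have "f N = f 0" using assms fermat by (simp add: f_def)
  have "(\<Sum>i<Suc N. f i) = f 0 + (\<Sum>i<N. f (Suc i))" by (rule sum.lessThan_Suc_shift)
  moreover have "(\<Sum>i<Suc N. f i) = (\<Sum>i<N. f i) + f N" by simp
  ultimately have "(\<Sum>i<N. f (Suc i)) = (\<Sum>i<N. f i)" using \<open>f N = f 0\<close> by (simp add: add.commute)
  thus ?thesis by (simp add: trd_def fS f_def)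
qed

lemma trd_frob_mult: assumes "d * N = n" shows "trd d N (x ^ (2 ^ (d * j))) = trd d N x"
proof (induction j)
  case (Suc j)
  have "x ^ (2 ^ (d * Suc j)) = (x ^ (2 ^ (d * j))) ^ (2 ^ d)"
    by (simp add: pow2_pow2 add.commute)
  thus ?case using Suc trd_frob[OF assms] by simp
qed simp

lemma trd_add: "trd d N (x + y) = trd d N x + trd d N y"
  by (simp add: trd_def frob_add sum.distrib)

lemma trd_fix: assumes "d * N = n" shows "(trd d N x) ^ (2 ^ d) = trd d N x"
proof -
  have "(trd d N x) ^ (2 ^ d) = trd d N (x ^ (2 ^ d))"
    by (simp add: trd_def frob_sum pow2_pow2 add.commute)
  thus ?thesis using trd_frob[OF assms] by simp
qed

lemma trd_scal: assumes "(c::'a) ^ (2 ^ d) = c" shows "trd d N (c * x) = c * trd d N x"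
  by (simp add: trd_def power_mult_distrib pow_fix_mult[OF assms] sum_distrib_left)

lemma tr_add: "Tr (x + y) = Tr x + tr n y"
  by (simp add: tr_trd trd_add)

lemma tr_frob: "Tr (x ^ (2 ^ j)) = Tr x"
proof (induction j)
  case (Suc j)
  have "x ^ (2 ^ Suc j) = (x ^ (2 ^ j)) ^ (2 ^ 1)"
    by (metis pow2_pow2 Suc_eq_plus1)
  thus ?case using Suc trd_frob[of 1 n] by (simp add: tr_trd)
qed simp

lemma tr_01: "Tr x = 0 \<or> Tr x = 1"
proof -
  have "(Tr x) ^ 2 = Tr x"
    using trd_fix[of 1 n x] by (simp add: tr_trd)
  hence "Tr x * (Tr x - 1) = 0" by (simp add: algebra_simps power2_eq_square)
  thus ?thesis by auto
qed

lemma trd_nonzero: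
  assumes "d > 0" "d * N = n"
  shows "\<exists>x. trd d N x \<noteq> 0"
proof (rule ccontr)
  assume "\<not> ?thesis"
  hence all0: "\<forall>x. trd d N x = 0" by auto
  have N: "N > 0" using assms n_pos by (cases N) auto
  define P :: "'a poly" where "P = (\<Sum>i<N. monom 1 (2 ^ (d * i)))"
  have evalP: "poly P x = trd d N x" for x
    by (simp add: P_def poly_sum poly_monom trd_def)
  have injE: "(2::nat) ^ (d * i) = 2 ^ (d * j) \<longleftrightarrow> i = j" for i j
    using assms(1) by simp
  have "coeff P (2 ^ (d * (N - 1))) = (\<Sum>i<N. if 2 ^ (d * i) = (2::nat) ^ (d * (N - 1)) then 1 else 0)"
    by (simp add: P_def coeff_sum)
  also have "\<dots> = (\<Sum>i\<in>{N - 1}. 1)"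
    by (rule sum.mono_neutral_cong_right) (use N injE in auto)
  finally have "coeff P (2 ^ (d * (N - 1))) = 1" by simp
  hence P0: "P \<noteq> 0" by auto
  have degP: "degree P \<le> 2 ^ (d * (N - 1))"
    unfolding P_def
  proof (rule degree_sum_le)
    fix i assume "i \<in> {..<N}"
    hence "d * i \<le> d * (N - 1)" by auto
    hence "(2::nat) ^ (d * i) \<le> 2 ^ (d * (N - 1))" by (rule power_increasing) simp
    thus "degree (monom (1::'a) (2 ^ (d * i))) \<le> 2 ^ (d * (N - 1))"
      using degree_monom_le order_trans by blast
  qed simp
  have "card {x. poly P x = 0} \<le> degree P" by (rule card_poly_roots_bound[OF P0])
  moreover have "{x. poly P x = 0} = UNIV" using all0 evalP by auto
  ultimately have "(2::nat) ^ n \<le> degree P" using card_q by simp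
  hence "(2::nat) ^ n \<le> 2 ^ (d * (N - 1))" using degP by linarith
  hence "n \<le> d * (N - 1)" by simp
  moreover have "d * (N - 1) < n" using assms N n_pos by (simp add: diff_mult_distrib2)
  ultimately show False by simp
qed

lemma trd_nondeg:
  assumes "d > 0" "d * N = n" "\<forall>x. trd d N (x * z) = 0"
  shows "z = 0"
proof (rule ccontr)
  assume z: "z \<noteq> 0"
  obtain w where w: "trd d N w \<noteq> 0" using trd_nonzero[OF assms(1,2)] by blast
  have "trd d N ((w / z) * z) = 0" using assms(3) by blast
  thus False using w z by simp
qed

lemma tr_nondeg: "(\<forall>x. Tr (x * z) = 0) \<Longrightarrow> z = 0"
  using trd_nondeg[of 1 n z] n_pos by (simp add: tr_trd)

definition e :: "'a \<Rightarrow> int" where "e z = sgn2 (Tr z)"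

lemma e_add: "e (a + b) = e a * e b"
  using tr_01[of a] tr_01[of b] by (auto simp: e_def sgn2_def tr_add)

lemma e_zero[simp]: "e 0 = 1"
  by (simp add: e_def sgn2_def tr_def power_0_left)

lemma e_pm: "e a = 1 \<or> e a = -1"
  by (simp add: e_def sgn2_def)

lemma e_frob: "e (x ^ (2 ^ j)) = e x"
  by (simp add: e_def tr_frob)

lemma group_char_sum:
  fixes W :: "'a set" and h :: "'a \<Rightarrow> int"
  assumes W: "\<And>x y. x \<in> W \<Longrightarrow> y \<in> W \<Longrightarrow> x + y \<in> W"
    and h: "\<And>x y. x \<in> W \<Longrightarrow> y \<in> W \<Longrightarrow> h (x + y) = h x * h y"
    and w0: "w0 \<in> W" "h w0 = -1"
  shows "(\<Sum>x\<in>W. h x) = 0"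
proof -
  have "(\<Sum>x\<in>W. h x) = (\<Sum>x\<in>W. h (x + w0))"
    by (rule sum.reindex_bij_witness[of _ "\<lambda>x. x + w0" "\<lambda>x. x + w0"])
       (use W w0 in \<open>auto simp: add.assoc\<close>)
  also have "\<dots> = (\<Sum>x\<in>W. - h x)"
    by (rule sum.cong) (use h w0 in auto)
  finally show ?thesis by (simp add: sum_negf)
qed

lemma char_sum: "(\<Sum>x\<in>UNIV. e (c * x)) = (if c = 0 then 2 ^ n else 0)"
proof (cases "c = 0")
  case True thus ?thesis using card_q by simp
next
  case False
  obtain w where w: "Tr (w * 1) \<noteq> 0" using tr_nondeg[of 1] by auto
  have "e (c * (w / c)) = -1" using w False tr_01[of w] by (simp add: e_def sgn2_def)
  hence "(\<Sum>x\<in>UNIV. e (c * x)) = 0"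
    by (intro group_char_sum[of UNIV _ "w / c"]) (auto simp: distrib_left e_add)
  thus ?thesis using False by simp
qed

end

context gf
begin

definition Qf :: "nat \<Rightarrow> 'a \<Rightarrow> 'a \<Rightarrow> 'a \<Rightarrow> 'a" where
  "Qf k \<alpha> \<beta> x = \<alpha> * x ^ (2 ^ (2 * k) + 1) + \<beta> * x ^ (2 ^ k + 1)"

definition Bil :: "nat \<Rightarrow> 'a \<Rightarrow> 'a \<Rightarrow> 'a \<Rightarrow> 'a \<Rightarrow> 'a" where
  "Bil k \<alpha> \<beta> x z = \<alpha> * (x ^ (2 ^ (2 * k)) * z + x * z ^ (2 ^ (2 * k)))
                 + \<beta> * (x ^ (2 ^ k) * z + x * z ^ (2 ^ k))"

definition Lm :: "nat \<Rightarrow> 'a \<Rightarrow> 'a \<Rightarrow> 'a \<Rightarrow> 'a" where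
  "Lm k \<alpha> \<beta> z = \<alpha> * z ^ (2 ^ (2 * k)) + \<beta> * z ^ (2 ^ k)
     + (\<alpha> * z) ^ (2 ^ (2 * n - 2 * k)) + (\<beta> * z) ^ (2 ^ (n - k))"

lemma pow_plus1_add: "((x::'a) + z) ^ (2 ^ j + 1) = x ^ (2 ^ j + 1) + z ^ (2 ^ j + 1) + (x ^ (2 ^ j) * z + x * z ^ (2 ^ j))"
proof -
  have "(x + z) ^ (2 ^ j + 1) = (x ^ (2 ^ j) + z ^ (2 ^ j)) * (x + z)"
    by (simp add: frob_add)
  thus ?thesis by (simp add: algebra_simps)
qed

lemma Qf_add: "Qf k \<alpha> \<beta> (x + z) = Qf k \<alpha> \<beta> x + Qf k \<alpha> \<beta> z + Bil k \<alpha> \<beta> x z"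
  unfolding Qf_def Bil_def pow_plus1_add by (simp add: algebra_simps)

lemma Bil_sym: "Bil k \<alpha> \<beta> x z = Bil k \<alpha> \<beta> z x"
  unfolding Bil_def by (simp add: algebra_simps)

lemma Bil_self: "Bil k \<alpha> \<beta> x x = 0"
  unfolding Bil_def by simp

lemma trd_adj:
  assumes "d * N = n" "d dvd j" "j \<le> n * c"
  shows "trd d N (y ^ (2 ^ j) * w) = trd d N (y * w ^ (2 ^ (n * c - j)))"
proof -
  obtain t where t: "n * c - j = d * t"
    using assms by (metis dvd_diff_nat dvd_mult2 dvd_triv_left dvdE)
  have "trd d N (y ^ (2 ^ j) * w) = trd d N ((y ^ (2 ^ j) * w) ^ (2 ^ (n * c - j)))"
    using trd_frob_mult[OF assms(1), of "y ^ (2 ^ j) * w" t] t by simp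
  also have "(y ^ (2 ^ j) * w) ^ (2 ^ (n * c - j)) = y ^ (2 ^ (n * c)) * w ^ (2 ^ (n * c - j))"
    using assms(3) by (simp add: power_mult_distrib pow2_pow2)
  also have "y ^ (2 ^ (n * c)) = y" by (rule fermat_mult)
  finally show ?thesis .
qed

end

locale gfk = gf n p for n :: nat and p :: "'a::{field,finite}" +
  fixes k d N :: nat
  assumes k_ge: "1 \<le> k" and k_le: "k \<le> n - 1"
    and d_def: "d = gcd n k" and N_def: "N = n div d"
begin

lemma d_pos: "d > 0" using d_def n_pos by simp
lemma dN: "d * N = n" using d_def N_def by simp
lemma d_dvd_k: "d dvd k" using d_def by simp
lemma d_dvd_n: "d dvd n" using d_def by simp

abbreviation "Q \<equiv> Qf k"
abbreviation "L \<equiv> Lm k"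
abbreviation "BB \<equiv> Bil k"

lemma trd_Bil: "trd d N (BB \<alpha> \<beta> x z) = trd d N (x * L \<alpha> \<beta> z)"
proof -
  have k2: "2 * k \<le> n * 2" using k_le by simp
  have k1: "k \<le> n * 1" using k_le by simp
  have e1: "trd d N (x ^ (2 ^ (2 * k)) * (\<alpha> * z)) = trd d N (x * (\<alpha> * z) ^ (2 ^ (2 * n - 2 * k)))"
    using trd_adj[OF dN _ k2, of x "\<alpha> * z"] d_dvd_k by (simp add: mult.commute)
  have e2: "trd d N (x ^ (2 ^ k) * (\<beta> * z)) = trd d N (x * (\<beta> * z) ^ (2 ^ (n - k)))"
    using trd_adj[OF dN _ k1, of x "\<beta> * z"] d_dvd_k by simp
  have "BB \<alpha> \<beta> x z = x ^ (2 ^ (2 * k)) * (\<alpha> * z) + x * (\<alpha> * z ^ (2 ^ (2 * k)))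
        + (x ^ (2 ^ k) * (\<beta> * z) + x * (\<beta> * z ^ (2 ^ k)))"
    unfolding Bil_def by (simp add: algebra_simps)
  hence "trd d N (BB \<alpha> \<beta> x z) = trd d N (x ^ (2 ^ (2 * k)) * (\<alpha> * z)) + trd d N (x * (\<alpha> * z ^ (2 ^ (2 * k))))
        + (trd d N (x ^ (2 ^ k) * (\<beta> * z)) + trd d N (x * (\<beta> * z ^ (2 ^ k))))"
    by (simp add: trd_add)
  also have "\<dots> = trd d N (x * L \<alpha> \<beta> z)"
    unfolding e1 e2 Lm_def by (simp add: trd_add algebra_simps)
  finally show ?thesis .
qed

lemma tr_Bil: "Tr (BB \<alpha> \<beta> x z) = Tr (x * L \<alpha> \<beta> z)"
proof -
  have k2: "2 * k \<le> n * 2" using k_le by simp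
  have k1: "k \<le> n * 1" using k_le by simp
  have e1: "Tr (x ^ (2 ^ (2 * k)) * (\<alpha> * z)) = Tr (x * (\<alpha> * z) ^ (2 ^ (2 * n - 2 * k)))"
    using trd_adj[of 1 n "2*k" 2 x "\<alpha> * z"] k_le by (simp add: mult.commute tr_trd)
  have e2: "Tr (x ^ (2 ^ k) * (\<beta> * z)) = Tr (x * (\<beta> * z) ^ (2 ^ (n - k)))"
    using trd_adj[of 1 n "k" 1 x "\<beta> * z"] k_le by (simp add: tr_trd)
  have "BB \<alpha> \<beta> x z = x ^ (2 ^ (2 * k)) * (\<alpha> * z) + x * (\<alpha> * z ^ (2 ^ (2 * k)))
        + (x ^ (2 ^ k) * (\<beta> * z) + x * (\<beta> * z ^ (2 ^ k)))"
    unfolding Bil_def by (simp add: algebra_simps)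
  hence "Tr (BB \<alpha> \<beta> x z) = Tr (x ^ (2 ^ (2 * k)) * (\<alpha> * z)) + Tr (x * (\<alpha> * z ^ (2 ^ (2 * k))))
        + (Tr (x ^ (2 ^ k) * (\<beta> * z)) + Tr (x * (\<beta> * z ^ (2 ^ k))))"
    by (simp add: tr_add)
  also have "\<dots> = Tr (x * L \<alpha> \<beta> z)"
    unfolding e1 e2 Lm_def by (simp add: tr_add algebra_simps)
  finally show ?thesis .
qed

lemma e_Bil: "e (BB \<alpha> \<beta> x z) = e (x * L \<alpha> \<beta> z)"
  by (simp add: e_def tr_Bil)

lemma L_add: "L \<alpha> \<beta> (x + z) = L \<alpha> \<beta> x + L \<alpha> \<beta> z"
  unfolding Lm_def by (simp add: algebra_simps frob_add)

lemma L_zero[simp]: "L \<alpha> \<beta> 0 = 0"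
  unfolding Lm_def by (simp add: power_0_left)

definition W :: "'a \<Rightarrow> 'a \<Rightarrow> 'a set" where "W \<alpha> \<beta> = {z. L \<alpha> \<beta> z = 0}"

definition SS :: "'a \<Rightarrow> 'a \<Rightarrow> 'a \<Rightarrow> int" where
  "SS \<alpha> \<beta> \<gamma> = (\<Sum>x\<in>UNIV. e (Q \<alpha> \<beta> x + \<gamma> * x))"

lemma Q_zero[simp]: "Q \<alpha> \<beta> 0 = 0" by (simp add: Qf_def)

lemma SS_sq: "(SS \<alpha> \<beta> \<gamma>)^2 = 2 ^ n * (\<Sum>z\<in>W \<alpha> \<beta>. e (Q \<alpha> \<beta> z + \<gamma> * z))"
proof -
  define f where "f x = Q \<alpha> \<beta> x + \<gamma> * x" for x
  have fadd: "f (x + z) = f x + f z + BB \<alpha> \<beta> x z" for x z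
    by (simp add: f_def Qf_add algebra_simps)
  have "(SS \<alpha> \<beta> \<gamma>)^2 = (\<Sum>x\<in>UNIV. \<Sum>y\<in>UNIV. e (f x) * e (f y))"
    by (simp add: SS_def f_def power2_eq_square sum_product)
  also have "\<dots> = (\<Sum>x\<in>UNIV. \<Sum>z\<in>UNIV. e (f x) * e (f (x + z)))"
  proof (rule sum.cong[OF refl])
    fix x
    show "(\<Sum>y\<in>UNIV. e (f x) * e (f y)) = (\<Sum>z\<in>UNIV. e (f x) * e (f (x + z)))"
      by (rule sum.reindex_bij_witness[of _ "\<lambda>y. x + y" "\<lambda>y. x + y"])
         (auto simp: add.assoc[symmetric])
  qed
  also have "\<dots> = (\<Sum>x\<in>UNIV. \<Sum>z\<in>UNIV. e (f z) * e (x * L \<alpha> \<beta> z))"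
  proof (intro sum.cong refl)
    fix x z
    have "e (f x) * e (f (x + z)) = e (f x + f (x + z))" by (simp add: e_add)
    also have "f x + f (x + z) = f z + BB \<alpha> \<beta> x z"
      by (simp add: fadd add.assoc[symmetric])
    finally show "e (f x) * e (f (x + z)) = e (f z) * e (x * L \<alpha> \<beta> z)"
      by (simp add: e_add e_Bil)
  qed
  also have "\<dots> = (\<Sum>z\<in>UNIV. e (f z) * (\<Sum>x\<in>UNIV. e (L \<alpha> \<beta> z * x)))"
    by (subst sum.swap) (simp add: sum_distrib_left mult.commute)
  also have "\<dots> = (\<Sum>z\<in>UNIV. if L \<alpha> \<beta> z = 0 then 2 ^ n * e (f z) else 0)"
    by (intro sum.cong refl) (simp add: char_sum)
  also have "\<dots> = 2 ^ n * (\<Sum>z\<in>W \<alpha> \<beta>. e (f z))"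
    by (simp add: sum.If_cases W_def sum_distrib_left)
  finally show ?thesis by (simp add: f_def)
qed


lemma W_add: "x \<in> W \<alpha> \<beta> \<Longrightarrow> z \<in> W \<alpha> \<beta> \<Longrightarrow> x + z \<in> W \<alpha> \<beta>"
  by (simp add: W_def L_add)

lemma W_zero[simp]: "0 \<in> W \<alpha> \<beta>" by (simp add: W_def)

lemma W_sum: "(\<Sum>z\<in>W \<alpha> \<beta>. e (Q \<alpha> \<beta> z + \<gamma> * z)) = 0
           \<or> (\<Sum>z\<in>W \<alpha> \<beta>. e (Q \<alpha> \<beta> z + \<gamma> * z)) = int (card (W \<alpha> \<beta>))"
proof -
  define f where "f x = Q \<alpha> \<beta> x + \<gamma> * x" for x
  have hom: "e (f (x + z)) = e (f x) * e (f z)" if "x \<in> W \<alpha> \<beta>" "z \<in> W \<alpha> \<beta>" for x z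
  proof -
    have "f (x + z) = f x + f z + BB \<alpha> \<beta> x z"
      by (simp add: f_def Qf_add algebra_simps)
    moreover have "e (BB \<alpha> \<beta> x z) = 1" using that by (simp add: e_Bil W_def)
    ultimately show ?thesis by (simp add: e_add)
  qed
  show ?thesis
  proof (cases "\<exists>w0\<in>W \<alpha> \<beta>. e (f w0) = -1")
    case True
    then obtain w0 where "w0 \<in> W \<alpha> \<beta>" "e (f w0) = -1" by blast
    hence "(\<Sum>z\<in>W \<alpha> \<beta>. e (f z)) = 0"
      by (intro group_char_sum[of "W \<alpha> \<beta>" _ w0]) (auto intro: W_add hom)
    thus ?thesis by (simp add: f_def)
  next
    case False
    hence "\<forall>z\<in>W \<alpha> \<beta>. e (f z) = 1" using e_pm by blast
    hence "(\<Sum>z\<in>W \<alpha> \<beta>. e (f z)) = int (card (W \<alpha> \<beta>))" by simp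
    thus ?thesis by (simp add: f_def)
  qed
qed

lemma SS_sq_cases: "(SS \<alpha> \<beta> \<gamma>)^2 = 0 \<or> (SS \<alpha> \<beta> \<gamma>)^2 = 2 ^ n * int (card (W \<alpha> \<beta>))"
  using W_sum[of \<alpha> \<beta> \<gamma>] SS_sq[of \<alpha> \<beta> \<gamma>] by auto

lemma SS_sum: "(\<Sum>\<gamma>\<in>UNIV. SS \<alpha> \<beta> \<gamma>) = 2 ^ n"
proof -
  have "(\<Sum>\<gamma>\<in>UNIV. SS \<alpha> \<beta> \<gamma>) = (\<Sum>x\<in>UNIV. e (Q \<alpha> \<beta> x) * (\<Sum>\<gamma>\<in>UNIV. e (x * \<gamma>)))"
    unfolding SS_def by (subst sum.swap) (simp add: e_add sum_distrib_left mult.commute)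
  also have "\<dots> = (\<Sum>x\<in>UNIV. if x = (0::'a) then 2 ^ n else 0)"
    by (rule sum.cong) (auto simp: char_sum)
  also have "\<dots> = 2 ^ n" by simp
  finally show ?thesis .
qed

lemma SS_sq_sum: "(\<Sum>\<gamma>\<in>UNIV. (SS \<alpha> \<beta> \<gamma>)^2) = 2 ^ (2 * n)"
proof -
  have "(\<Sum>\<gamma>\<in>UNIV. (SS \<alpha> \<beta> \<gamma>)^2)
      = 2 ^ n * (\<Sum>z\<in>W \<alpha> \<beta>. e (Q \<alpha> \<beta> z) * (\<Sum>\<gamma>\<in>UNIV. e (z * \<gamma>)))"
  proof -
    have "(\<Sum>\<gamma>\<in>UNIV. (SS \<alpha> \<beta> \<gamma>)^2)
       = 2 ^ n * (\<Sum>\<gamma>\<in>UNIV. \<Sum>z\<in>W \<alpha> \<beta>. e (Q \<alpha> \<beta> z) * e (z * \<gamma>))"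
      unfolding SS_sq by (simp add: e_add sum_distrib_left mult.commute)
    also have "\<dots> = 2 ^ n * (\<Sum>z\<in>W \<alpha> \<beta>. \<Sum>\<gamma>\<in>UNIV. e (Q \<alpha> \<beta> z) * e (z * \<gamma>))"
      by (subst sum.swap) simp
    finally show ?thesis by (simp add: sum_distrib_left)
  qed
  also have "(\<Sum>z\<in>W \<alpha> \<beta>. e (Q \<alpha> \<beta> z) * (\<Sum>\<gamma>\<in>UNIV. e (z * \<gamma>)))
      = (\<Sum>z\<in>W \<alpha> \<beta>. if z = 0 then 2 ^ n else 0)"
    by (rule sum.cong) (auto simp: char_sum)
  also have "\<dots> = 2 ^ n" by (simp add: sum.If_cases)
  finally show ?thesis by (simp add: power_add[symmetric] mult_2)
qed

end

context gf
begin

lemma symp: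
  fixes K :: "'a set" and B :: "'a \<Rightarrow> 'a \<Rightarrow> 'a" and U :: "'a set"
  assumes K0: "0 \<in> K" and K1: "1 \<in> K" and Kinv: "\<And>c. c \<in> K \<Longrightarrow> inverse c \<in> K"
   and BK: "\<And>x y. B x y \<in> K"
   and Badd: "\<And>x y z. B (x + y) z = B x z + B y z"
   and Bsc: "\<And>c x y. c \<in> K \<Longrightarrow> B (c * x) y = c * B x y"
   and Bsym: "\<And>x y. B x y = B y x"
   and Balt: "\<And>x. B x x = 0"
   and U0: "0 \<in> U" and Uadd: "\<And>x y. x \<in> U \<Longrightarrow> y \<in> U \<Longrightarrow> x + y \<in> U"
   and Usc: "\<And>c x. c \<in> K \<Longrightarrow> x \<in> U \<Longrightarrow> c * x \<in> U"
  shows "\<exists>j. card U = card K ^ (2 * j) * card {u\<in>U. \<forall>v\<in>U. B u v = 0}"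
  using U0 Uadd Usc
proof (induction "card U" arbitrary: U rule: less_induct)
  case less
  have Badd2: "B x (y + z) = B x y + B x z" for x y z using Badd Bsym by metis
  have Bsc2: "c \<in> K \<Longrightarrow> B x (c * y) = c * B x y" for c x y using Bsc Bsym by metis
  have B0: "B 0 y = 0" for y using Bsc[OF K0, of 0 y] by simp
  have B02: "B y 0 = 0" for y using B0 Bsym by metis
  show ?case
  proof (cases "\<forall>u\<in>U. \<forall>v\<in>U. B u v = 0")
    case True
    hence "{u\<in>U. \<forall>v\<in>U. B u v = 0} = U" by auto
    thus ?thesis by (intro exI[of _ 0]) simp
  next
    case False
    then obtain x y0 where x: "x \<in> U" and y0: "y0 \<in> U" and nz: "B x y0 \<noteq> 0" by blast
    define y where "y = inverse (B x y0) * y0"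
    have y: "y \<in> U" unfolding y_def by (rule less.prems(3)[OF Kinv[OF BK] y0])
    have Bxy: "B x y = 1" unfolding y_def using Bsc2[OF Kinv[OF BK]] nz by simp
    have Byx: "B y x = 1" using Bxy Bsym by metis
    define U' where "U' = {z\<in>U. B x z = 0 \<and> B y z = 0}"
    define g where "g = (\<lambda>(u, a, b). u + a * x + b * y)"
    have Bg1: "B (u + a * x + b * y) y = a" if "u \<in> U'" "a \<in> K" "b \<in> K" for u a b
      using that by (simp add: Badd Bsc Bxy Balt U'_def Bsym[of u y])
    have Bg2: "B x (u + a * x + b * y) = b" if "u \<in> U'" "a \<in> K" "b \<in> K" for u a b
      using that by (simp add: Badd2 Bsc2 Bxy Balt U'_def)
    have bij: "bij_betw g (U' \<times> (K \<times> K)) U"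
    proof (rule bij_betw_byWitness[where f' = "\<lambda>w. (w + B w y * x + B x w * y, B w y, B x w)"])
      show "\<forall>t\<in>U' \<times> K \<times> K. (\<lambda>w. (w + B w y * x + B x w * y, B w y, B x w)) (g t) = t"
      proof
        fix t assume t: "t \<in> U' \<times> K \<times> K"
        then obtain u a b where tt: "t = (u, a, b)" "u \<in> U'" "a \<in> K" "b \<in> K" by auto
        have "g t = u + a * x + b * y" by (simp add: g_def tt)
        thus "(\<lambda>w. (w + B w y * x + B x w * y, B w y, B x w)) (g t) = t"
          using Bg1[OF tt(2-4)] Bg2[OF tt(2-4)] tt(1)
          by (simp add: add.assoc)
      qed
      show "\<forall>w\<in>U. g (w + B w y * x + B x w * y, B w y, B x w) = w"
        by (simp add: g_def algebra_simps)
      show "g ` (U' \<times> K \<times> K) \<subseteq> U"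
      proof
        fix w assume "w \<in> g ` (U' \<times> K \<times> K)"
        then obtain u a b where "u \<in> U'" "a \<in> K" "b \<in> K" "w = u + a * x + b * y"
          by (auto simp: g_def)
        moreover have "u \<in> U" using \<open>u \<in> U'\<close> by (simp add: U'_def)
        ultimately show "w \<in> U" using less.prems(2,3) x y by metis
      qed
      show "(\<lambda>w. (w + B w y * x + B x w * y, B w y, B x w)) ` U \<subseteq> U' \<times> K \<times> K"
      proof
        fix t assume "t \<in> (\<lambda>w. (w + B w y * x + B x w * y, B w y, B x w)) ` U"
        then obtain w where w: "w \<in> U" and t: "t = (w + B w y * x + B x w * y, B w y, B x w)" by auto
        have inU: "w + B w y * x + B x w * y \<in> U"
          using less.prems(2,3) x y w BK by metis
        have "B x (w + B w y * x + B x w * y) = 0"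
          by (simp add: Badd2 Bsc2 BK Balt Bxy)
        moreover have "B y (w + B w y * x + B x w * y) = 0"
          by (simp add: Badd2 Bsc2 BK Balt Byx Bsym[of y w])
        ultimately show "t \<in> U' \<times> K \<times> K" using t inU BK by (auto simp: U'_def)
      qed
    qed
    have finU: "finite U" by simp
    have cardU: "card U = card U' * (card K * card K)"
      using bij_betw_same_card[OF bij] by (simp add: card_cartesian_product)
    have "x \<notin> U'" using Byx by (simp add: U'_def)
    hence "U' \<subset> U" using x unfolding U'_def by auto
    hence lt: "card U' < card U" by (simp add: psubset_card_mono)
    have IH: "\<exists>j. card U' = card K ^ (2 * j) * card {u\<in>U'. \<forall>v\<in>U'. B u v = 0}"
    proof (rule less.hyps[OF lt])
      show "0 \<in> U'" using less.prems by (simp add: U'_def B02)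
      show "\<And>a b. a \<in> U' \<Longrightarrow> b \<in> U' \<Longrightarrow> a + b \<in> U'"
        using less.prems by (auto simp: U'_def Badd2)
      show "\<And>c a. c \<in> K \<Longrightarrow> a \<in> U' \<Longrightarrow> c * a \<in> U'"
        using less.prems by (auto simp: U'_def Bsc2)
    qed
    have Req: "{u\<in>U'. \<forall>v\<in>U'. B u v = 0} = {u\<in>U. \<forall>v\<in>U. B u v = 0}"
    proof
      show "{u\<in>U'. \<forall>v\<in>U'. B u v = 0} \<subseteq> {u\<in>U. \<forall>v\<in>U. B u v = 0}"
      proof
        fix r assume r: "r \<in> {u\<in>U'. \<forall>v\<in>U'. B u v = 0}"
        have rU: "r \<in> U" using r by (simp add: U'_def)
        have rx: "B r x = 0" "B r y = 0"
        proof -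
          have "B x r = 0" "B y r = 0" using r by (simp_all add: U'_def)
          thus "B r x = 0" "B r y = 0" using Bsym by metis+
        qed
        have "B r w = 0" if w: "w \<in> U" for w
        proof -
          define u where "u = w + B w y * x + B x w * y"
          have uU: "u \<in> U" unfolding u_def using less.prems(2,3) x y w BK by metis
          have "B x u = 0"
            unfolding u_def by (simp add: Badd2 Bsc2 BK Balt Bxy)
          moreover have "B y u = 0"
            unfolding u_def by (simp add: Badd2 Bsc2 BK Balt Byx Bsym[of y w])
          ultimately have "u \<in> U'" using uU by (simp add: U'_def)
          hence ru: "B r u = 0" using r by blast
          have wu: "w = u + B w y * x + B x w * y" unfolding u_def by (simp add: algebra_simps)
          have "B r (u + B w y * x + B x w * y) = 0"
            by (simp add: Badd2 Bsc2 BK rx ru)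
          thus ?thesis using wu by simp
        qed
        thus "r \<in> {u\<in>U. \<forall>v\<in>U. B u v = 0}" using rU by blast
      qed
      show "{u\<in>U. \<forall>v\<in>U. B u v = 0} \<subseteq> {u\<in>U'. \<forall>v\<in>U'. B u v = 0}"
      proof
        fix r assume r: "r \<in> {u\<in>U. \<forall>v\<in>U. B u v = 0}"
        hence "B r x = 0" "B r y = 0" using x y by auto
        hence "B x r = 0" "B y r = 0" using Bsym by metis+
        moreover have "\<forall>v\<in>U'. B r v = 0" using r by (auto simp: U'_def)
        ultimately show "r \<in> {u\<in>U'. \<forall>v\<in>U'. B u v = 0}" using r by (auto simp: U'_def)
      qed
    qed
    obtain j where "card U' = card K ^ (2 * j) * card {u\<in>U'. \<forall>v\<in>U'. B u v = 0}" using IH by blast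
    hence "card U = card K ^ (2 * Suc j) * card {u\<in>U. \<forall>v\<in>U. B u v = 0}"
      using cardU Req by (simp add: algebra_simps power_add)
    thus ?thesis by blast
  qed
qed


definition lp :: "nat \<Rightarrow> (nat \<Rightarrow> 'a) \<Rightarrow> nat \<Rightarrow> 'a \<Rightarrow> 'a" where
  "lp k a m x = (\<Sum>i\<le>m. a i * x ^ (2 ^ (k * i)))"

lemma lp_add: "lp k a m (x + y) = lp k a m x + lp k a m y"
  by (simp add: lp_def frob_add distrib_left sum.distrib)

lemma lp_zero[simp]: "lp k a m 0 = 0"
  by (simp add: lp_def power_0_left)

lemma lp_scal: assumes "(c::'a) ^ (2 ^ k) = c" shows "lp k a m (c * x) = c * lp k a m x"
proof -
  have cc: "c ^ (2 ^ (k * i)) = c" for i by (rule pow_fix_mult[OF assms])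
  show ?thesis unfolding lp_def sum_distrib_left
    by (rule sum.cong) (simp_all add: power_mult_distrib cc)
qed

lemma phi_pow: "((x::'a) ^ (2 ^ k) + c * x) ^ (2 ^ (k * j)) = x ^ (2 ^ (k * Suc j)) + c ^ (2 ^ (k * j)) * x ^ (2 ^ (k * j))"
proof -
  have "(x ^ (2 ^ k) + c * x) ^ (2 ^ (k * j)) = (x ^ (2 ^ k)) ^ (2 ^ (k * j)) + (c * x) ^ (2 ^ (k * j))"
    by (rule frob_add)
  also have "(x ^ (2 ^ k)) ^ (2 ^ (k * j)) = x ^ (2 ^ (k * Suc j))"
    by (simp add: pow2_pow2)
  finally show ?thesis by (simp add: power_mult_distrib)
qed

lemma lp_div: "\<exists>b r. (\<forall>x. lp k a (Suc m) x = lp k b m (x ^ (2 ^ k) + c * x) + r * x) \<and> b m = a (Suc m)"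
proof (induction m arbitrary: a)
  case 0
  show ?case
  proof (intro exI conjI allI)
    fix x
    show "lp k a (Suc 0) x = lp k (\<lambda>_. a (Suc 0)) 0 (x ^ (2 ^ k) + c * x) + (a 0 + a (Suc 0) * c) * x"
      by (simp add: lp_def algebra_simps)
  qed simp
next
  case (Suc m)
  define a' where "a' = a(Suc m := a (Suc m) + a (Suc (Suc m)) * c ^ (2 ^ (k * Suc m)))"
  obtain b' r where br: "\<forall>x. lp k a' (Suc m) x = lp k b' m (x ^ (2 ^ k) + c * x) + r * x"
    and bm: "b' m = a' (Suc m)" using Suc.IH[of a'] by blast
  define b where "b = b'(Suc m := a (Suc (Suc m)))"
  have la': "lp k a' (Suc m) x = lp k a (Suc m) x + a (Suc (Suc m)) * c ^ (2 ^ (k * Suc m)) * x ^ (2 ^ (k * Suc m))" for x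
  proof -
    have "lp k a' (Suc m) x = (\<Sum>i\<le>m. a i * x ^ (2 ^ (k * i))) + a' (Suc m) * x ^ (2 ^ (k * Suc m))"
      unfolding lp_def by (simp add: a'_def)
    thus ?thesis unfolding lp_def by (simp add: a'_def algebra_simps)
  qed
  have lb: "lp k b (Suc m) y = lp k b' m y + a (Suc (Suc m)) * y ^ (2 ^ (k * Suc m))" for y
    unfolding lp_def by (simp add: b_def)
  show ?case
  proof (intro exI conjI allI)
    fix x
    have "lp k a (Suc (Suc m)) x = lp k a (Suc m) x + a (Suc (Suc m)) * x ^ (2 ^ (k * Suc (Suc m)))"
      unfolding lp_def by simp
    also have "lp k a (Suc m) x = lp k a' (Suc m) x + a (Suc (Suc m)) * c ^ (2 ^ (k * Suc m)) * x ^ (2 ^ (k * Suc m))"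
      using la'[of x] by (simp add: algebra_simps)
    finally show "lp k a (Suc (Suc m)) x = lp k b (Suc m) (x ^ (2 ^ k) + c * x) + r * x"
      unfolding lb phi_pow br[rule_format] by (simp add: algebra_simps)
  qed (simp add: b_def)
qed

lemma lp_bound:
  assumes "a m \<noteq> 0"
  shows "card {x. lp k a m x = 0} \<le> card {c::'a. c ^ (2 ^ k) = c} ^ m"
  using assms
proof (induction m arbitrary: a)
  case 0
  have "{x. lp k a 0 x = 0} = {0}" using 0 by (auto simp: lp_def)
  thus ?case by simp
next
  case (Suc m)
  define K where "K = {c::'a. c ^ (2 ^ k) = c}"
  define V where "V = {x. lp k a (Suc m) x = 0}"
  have K0: "0 \<in> K" by (simp add: K_def)
  have cardK: "card K \<ge> 1" using K0 by (metis One_nat_def Suc_leI card_gt_0_iff empty_iff finite)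
  show ?case
  proof (cases "V \<subseteq> {0}")
    case True
    hence "card V \<le> card {0::'a}" by (intro card_mono) auto
    hence "card V \<le> 1" by simp
    moreover have "1 \<le> card K ^ Suc m" using cardK by simp
    ultimately show ?thesis unfolding V_def K_def by linarith
  next
    case False
    then obtain v where vV: "v \<in> V" and v0: "v \<noteq> 0" by blast
    define c where "c = v ^ (2 ^ k) / v"
    have cv: "c * v = v ^ (2 ^ k)" using v0 by (simp add: c_def)
    have c0: "c \<noteq> 0" using v0 by (simp add: c_def)
    obtain b r where br: "\<forall>x. lp k a (Suc m) x = lp k b m (x ^ (2 ^ k) + c * x) + r * x"
      and bm: "b m = a (Suc m)" using lp_div[of k a m c] by blast
    define \<phi> where "\<phi> x = x ^ (2 ^ k) + c * x" for x
    have "lp k a (Suc m) v = 0" using vV by (simp add: V_def)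
    hence "r * v = 0" using br cv by simp
    hence r0: "r = 0" using v0 by simp
    have \<phi>add: "\<phi> (x + y) = \<phi> x + \<phi> y" for x y by (simp add: \<phi>_def frob_add algebra_simps)
    have img: "\<phi> ` V \<subseteq> {y. lp k b m y = 0}"
      using br r0 by (auto simp: V_def \<phi>_def)
    have IH: "card {y. lp k b m y = 0} \<le> card K ^ m"
      using Suc.IH[of b] bm Suc.prems by (simp add: K_def)
    have c1: "card (\<phi> ` V) \<le> card K ^ m"
    proof -
      have "card (\<phi> ` V) \<le> card {y. lp k b m y = 0}" by (rule card_mono[OF _ img]) simp
      thus ?thesis using IH by linarith
    qed
    have fib: "card {x\<in>V. \<phi> x = y} \<le> card K" if yV: "y \<in> \<phi> ` V" for y
    proof -
      obtain x0 where x0: "x0 \<in> V" "y = \<phi> x0" using yV by blast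
      have "{x\<in>V. \<phi> x = y} \<subseteq> (\<lambda>t. x0 + t * v) ` K"
      proof
        fix x assume "x \<in> {x\<in>V. \<phi> x = y}"
        hence "\<phi> x = \<phi> x0" using x0 by simp
        hence "\<phi> (x + x0) = 0" by (simp add: \<phi>add)
        hence w: "(x + x0) ^ (2 ^ k) = c * (x + x0)"
          unfolding \<phi>_def by (metis add_left_cancel add_self)
        define t where "t = (x + x0) / v"
        have "t ^ (2 ^ k) = c * (x + x0) / (c * v)"
          unfolding t_def by (simp add: power_divide w cv)
        also have "\<dots> = t" using c0 by (simp add: t_def)
        finally have "t \<in> K" by (simp add: K_def)
        moreover have "x = x0 + t * v"
        proof -
          have "t * v = x + x0" using v0 by (simp add: t_def)
          thus ?thesis by (metis add.commute add.left_commute add_self add_0_right)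
        qed
        ultimately show "x \<in> (\<lambda>t. x0 + t * v) ` K" by blast
      qed
      hence "card {x\<in>V. \<phi> x = y} \<le> card ((\<lambda>t. x0 + t * v) ` K)"
        by (intro card_mono) auto
      also have "\<dots> \<le> card K" by (rule card_image_le) simp
      finally show ?thesis .
    qed
    have "V \<subseteq> (\<Union>y\<in>\<phi> ` V. {x\<in>V. \<phi> x = y})" by blast
    hence "card V \<le> card (\<Union>y\<in>\<phi> ` V. {x\<in>V. \<phi> x = y})" by (intro card_mono) auto
    also have "\<dots> \<le> (\<Sum>y\<in>\<phi> ` V. card {x\<in>V. \<phi> x = y})" by (rule card_UN_le) simp
    also have "\<dots> \<le> (\<Sum>y\<in>\<phi> ` V. card K)" by (rule sum_mono) (use fib in auto)
    also have "\<dots> = card (\<phi> ` V) * card K" by simp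
    also have "\<dots> \<le> card K ^ m * card K" using c1 by simp
    finally show ?thesis by (simp add: V_def K_def mult.commute)
  qed
qed

end

locale gfkp = gfk n p k d N for n :: nat and p :: "'a::{field,finite}" and k d N +
  assumes prim: "primitive_elem p" and oddN: "odd N"
    and k3: "3 * k \<noteq> n" "3 * k \<noteq> 2 * n"
begin

lemma n_ge2: "n \<ge> 2" using k_ge k_le by linarith

lemma card_ge4: "CARD('a) \<ge> 4"
proof -
  have "(2::nat) ^ 2 \<le> 2 ^ n" using n_ge2 by (rule power_increasing) simp
  thus ?thesis using card_q by simp
qed

lemma q1_pos: "(2::nat) ^ n - 1 > 0"
proof -
  have "(2::nat) ^ 1 \<le> 2 ^ n" using n_pos by (intro power_increasing) auto
  thus ?thesis by simp
qed

lemma card_nz: "card (UNIV - {0::'a}) = 2 ^ n - 1"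
  using card_q by (simp add: card_Diff_subset)

lemma p_nz: "p \<noteq> 0"
proof
  assume p0: "p = 0"
  have "UNIV - {0::'a} \<subseteq> {1}"
  proof
    fix x :: 'a assume "x \<in> UNIV - {0}"
    then obtain i where "x = p ^ i" "x \<noteq> 0" using prim unfolding primitive_elem_def by blast
    thus "x \<in> {1}" using p0 by (cases i) auto
  qed
  hence "card (UNIV - {0::'a}) \<le> card {1::'a}" by (intro card_mono) auto
  hence "card (UNIV - {0::'a}) \<le> 1" by simp
  thus False using card_nz card_q card_ge4 by simp
qed

lemma p_order: "p ^ (2 ^ n - 1) = 1"
proof -
  have e: "(2::nat) ^ n = Suc (2 ^ n - 1)" by simp
  have "p ^ (2 ^ n) = p ^ (Suc (2 ^ n - 1))" by (simp only: e[symmetric])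
  hence "p * p ^ (2 ^ n - 1) = p ^ (2 ^ n)" by (simp only: power_Suc)
  also have "\<dots> = p * 1" using fermat by simp
  finally show ?thesis using p_nz by simp
qed

lemma p_pow_mod: "p ^ i = p ^ (i mod (2 ^ n - 1))"
proof -
  have e: "i = (2 ^ n - 1) * (i div (2 ^ n - 1)) + i mod (2 ^ n - 1)" by simp
  have "p ^ i = (p ^ (2 ^ n - 1)) ^ (i div (2 ^ n - 1)) * p ^ (i mod (2 ^ n - 1))"
    by (subst e) (simp only: power_add power_mult)
  thus ?thesis using p_order by simp
qed

lemma p_image: "(\<lambda>i. p ^ i) ` {..<2 ^ n - 1} = UNIV - {0}"
proof
  show "(\<lambda>i. p ^ i) ` {..<2 ^ n - 1} \<subseteq> UNIV - {0}" using p_nz by auto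
  show "UNIV - {0} \<subseteq> (\<lambda>i. p ^ i) ` {..<2 ^ n - 1}"
  proof
    fix x :: 'a assume "x \<in> UNIV - {0}"
    then obtain i where "x = p ^ i" using prim unfolding primitive_elem_def by blast
    hence "x = p ^ (i mod (2 ^ n - 1))" using p_pow_mod by simp
    moreover have "i mod (2 ^ n - 1) < 2 ^ n - 1"
      using q1_pos by (intro mod_less_divisor)
    ultimately show "x \<in> (\<lambda>i. p ^ i) ` {..<2 ^ n - 1}" by blast
  qed
qed

lemma p_inj: "inj_on (\<lambda>i. p ^ i) {..<2 ^ n - 1}"
proof -
  have "card ((\<lambda>i. p ^ i) ` {..<2 ^ n - 1}) = card {..<(2::nat) ^ n - 1}"
    by (simp only: p_image card_nz card_lessThan)
  thus ?thesis by (intro eq_card_imp_inj_on) simp_all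
qed


lemma fix_gcd:
  assumes "(c::'a) ^ (2 ^ a) = c" "c ^ (2 ^ b) = c"
  shows "c ^ (2 ^ (gcd a b)) = c"
  using assms
proof (induction a b rule: gcd_nat_induct)
  case (base m) thus ?case by simp
next
  case (step m b)
  have e: "m = b * (m div b) + m mod b" by simp
  have cb: "c ^ (2 ^ (b * (m div b))) = c" using pow_fix_mult[OF step.prems(2)] .
  have "c ^ (2 ^ m) = (c ^ (2 ^ (b * (m div b)))) ^ (2 ^ (m mod b))"
    by (subst e) (simp only: pow2_pow2)
  hence "c ^ (2 ^ (m mod b)) = c" using step.prems(1) cb by simp
  hence "c ^ (2 ^ gcd b (m mod b)) = c" using step.IH step.prems(2) by blast
  thus ?case using step.hyps by (simp add: gcd_non_0_nat)
qed

definition Kd :: "'a set" where "Kd = {c. c ^ (2 ^ d) = c}"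

lemma Kd_pow: assumes "c \<in> Kd" "d dvd j" shows "c ^ (2 ^ j) = c"
  using assms pow_fix_mult[of c d] unfolding Kd_def by (auto elim!: dvdE)

lemma Kk_iff: "((c::'a) ^ (2 ^ k) = c) \<longleftrightarrow> c \<in> Kd"
proof
  assume "c ^ (2 ^ k) = c"
  hence "c ^ (2 ^ gcd n k) = c" using fix_gcd fermat by blast
  hence "c ^ (2 ^ d) = c" using d_def by simp
  thus "c \<in> Kd" by (simp add: Kd_def)
qed (use Kd_pow d_dvd_k in blast)

lemma Kk_eq: "{c::'a. c ^ (2 ^ k) = c} = Kd"
  using Kk_iff by blast

lemma Kd_0: "0 \<in> Kd" by (simp add: Kd_def)
lemma Kd_1: "1 \<in> Kd" by (simp add: Kd_def)
lemma Kd_add: "a \<in> Kd \<Longrightarrow> b \<in> Kd \<Longrightarrow> a + b \<in> Kd" by (simp add: Kd_def frob_add)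
lemma Kd_mult: "a \<in> Kd \<Longrightarrow> b \<in> Kd \<Longrightarrow> a * b \<in> Kd" by (simp add: Kd_def power_mult_distrib)
lemma Kd_inv: "a \<in> Kd \<Longrightarrow> inverse a \<in> Kd" by (simp add: Kd_def power_inverse)

lemma dvd_pow_minus1: "(2::nat) ^ d - 1 dvd 2 ^ n - 1"
proof -
  have "(2::int) ^ n - 1 = (2 ^ d) ^ N - 1" using dN by (metis power_mult)
  also have "\<dots> = (2 ^ d - 1) * (\<Sum>i<N. (2 ^ d) ^ i)" by (rule power_diff_1_eq)
  finally have "(2::int) ^ d - 1 dvd 2 ^ n - 1" by simp
  moreover have "int (2 ^ d - 1) = 2 ^ d - 1" "int (2 ^ n - 1) = 2 ^ n - 1"
    by (simp_all add: of_nat_diff)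
  ultimately show ?thesis by (metis int_dvd_int_iff)
qed

lemma card_Kd: "card Kd = 2 ^ d"
proof (rule antisym)
  define P :: "'a poly" where "P = monom 1 (2 ^ d) - [:0, 1:]"
  have evalP: "poly P x = x ^ (2 ^ d) - x" for x by (simp add: P_def poly_monom)
  have "(2::nat) ^ d \<noteq> 1" using d_pos by simp
  hence "coeff P (2 ^ d) = 1" by (simp add: P_def coeff_pCons split: nat.split)
  hence P0: "P \<noteq> 0" by auto
  have "degree P \<le> max (degree (monom (1::'a) (2 ^ d))) (degree [:0, 1::'a:])"
    unfolding P_def by (rule degree_diff_le_max)
  also have "\<dots> \<le> 2 ^ d" using degree_monom_le[of "1::'a" "2 ^ d"] by simp
  finally have degP: "degree P \<le> 2 ^ d" .
  have "Kd = {x. poly P x = 0}" by (simp add: Kd_def evalP)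
  hence "card Kd \<le> degree P" using card_poly_roots_bound[OF P0] by simp
  thus "card Kd \<le> 2 ^ d" using degP by linarith
next
  define M where "M = ((2::nat) ^ n - 1) div (2 ^ d - 1)"
  have M: "(2 ^ d - 1) * M = 2 ^ n - 1" using dvd_pow_minus1 by (simp add: M_def)
  have d1: "(2::nat) ^ d - 1 > 0"
  proof -
    have "(2::nat) ^ 1 \<le> 2 ^ d" using d_pos by (intro power_increasing) auto
    thus ?thesis by simp
  qed
  have Mpos: "M > 0" using M q1_pos by (cases M) auto
  define G where "G = (\<lambda>j. p ^ (j * M)) ` {..<2 ^ d - 1}"
  have jlt: "j * M < 2 ^ n - 1" if "j < 2 ^ d - 1" for j
  proof -
    have "j * M < (2 ^ d - 1) * M" using that Mpos by simp
    also have "\<dots> = 2 ^ n - 1" by (rule M)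
    finally show ?thesis .
  qed
  have injG: "inj_on (\<lambda>j. p ^ (j * M)) {..<2 ^ d - 1}"
  proof (rule inj_onI)
    fix i j assume ij: "i \<in> {..<2 ^ d - 1}" "j \<in> {..<2 ^ d - 1}" "p ^ (i * M) = p ^ (j * M)"
    hence "i * M = j * M" using p_inj jlt by (auto dest: inj_onD)
    thus "i = j" using Mpos by simp
  qed
  have cardG: "card G = 2 ^ d - 1" using card_image[OF injG] by (simp add: G_def)
  have G0: "0 \<notin> G" using p_nz by (auto simp: G_def)
  have GK: "insert 0 G \<subseteq> Kd"
  proof
    fix x assume "x \<in> insert 0 G"
    then consider "x = 0" | j where "j < 2 ^ d - 1" "x = p ^ (j * M)" by (auto simp: G_def)
    thus "x \<in> Kd"
    proof cases
      case 1 thus ?thesis by (simp add: Kd_0)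
    next
      case 2
      have "x ^ (2 ^ d - 1) = p ^ (j * ((2 ^ d - 1) * M))"
        using 2 by (simp add: power_mult[symmetric] algebra_simps)
      also have "\<dots> = (p ^ (2 ^ n - 1)) ^ j" using M by (simp add: power_mult[symmetric] mult.commute)
      also have "\<dots> = 1" using p_order by simp
      finally have x1: "x ^ (2 ^ d - 1) = 1" .
      have xx: "x * x ^ (2 ^ d - 1) = x ^ (2 ^ d)"
      proof -
        have e: "(2::nat) ^ d = Suc (2 ^ d - 1)" by simp
        have "x ^ (2 ^ d) = x ^ (Suc (2 ^ d - 1))" by (simp only: e[symmetric])
        thus ?thesis by (simp only: power_Suc)
      qed
      have "x ^ (2 ^ d) = x" using xx x1 by (metis mult_1_right)
      thus ?thesis by (simp add: Kd_def)
    qed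
  qed
  have "card (insert 0 G) = 2 ^ d" using cardG G0 d1 by (simp add: G_def)
  moreover have "card (insert 0 G) \<le> card Kd" using GK by (intro card_mono) simp_all
  ultimately show "2 ^ d \<le> card Kd" by simp
qed

end

context gfkp
begin

lemma L_scal: assumes c: "c \<in> Kd" shows "L \<alpha> \<beta> (c * z) = c * L \<alpha> \<beta> z"
proof -
  have "d dvd 2 * k" "d dvd k" "d dvd 2 * n - 2 * k" "d dvd n - k"
    using d_dvd_k d_dvd_n by (simp_all add: dvd_diff_nat)
  hence e: "c ^ (2 ^ (2 * k)) = c" "c ^ (2 ^ k) = c" "c ^ (2 ^ (2 * n - 2 * k)) = c" "c ^ (2 ^ (n - k)) = c"
    using Kd_pow[OF c] by blast+
  have e2: "c ^ (2 ^ (k * 2)) = c" "c ^ (2 ^ (n * 2 - k * 2)) = c"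
    using e by (simp_all add: mult.commute)
  show ?thesis unfolding Lm_def
    by (simp add: power_mult_distrib e e2 algebra_simps)
qed

lemma W_scal: "c \<in> Kd \<Longrightarrow> z \<in> W \<alpha> \<beta> \<Longrightarrow> c * z \<in> W \<alpha> \<beta>"
  by (simp add: W_def L_scal)

lemma BB_add: "BB \<alpha> \<beta> (x + y) z = BB \<alpha> \<beta> x z + BB \<alpha> \<beta> y z"
  unfolding Bil_def by (simp add: frob_add algebra_simps)

lemma BB_scal: assumes c: "c \<in> Kd" shows "BB \<alpha> \<beta> (c * x) z = c * BB \<alpha> \<beta> x z"
proof -
  have "d dvd 2 * k" "d dvd k" using d_dvd_k by simp_all
  hence e: "c ^ (2 ^ (2 * k)) = c" "c ^ (2 ^ k) = c"
    using Kd_pow[OF c] by blast+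
  have e2: "c ^ (2 ^ (k * 2)) = c" using e by (simp add: mult.commute)
  show ?thesis unfolding Bil_def
    by (simp add: power_mult_distrib e e2 algebra_simps)
qed

definition Bd :: "'a \<Rightarrow> 'a \<Rightarrow> 'a \<Rightarrow> 'a \<Rightarrow> 'a" where
  "Bd \<alpha> \<beta> x y = trd d N (BB \<alpha> \<beta> x y)"

lemma rad_eq: "{u. \<forall>v. Bd \<alpha> \<beta> u v = 0} = W \<alpha> \<beta>"
proof -
  have "Bd \<alpha> \<beta> u v = trd d N (v * L \<alpha> \<beta> u)" for u v
    unfolding Bd_def by (simp add: Bil_sym[of k \<alpha> \<beta> u v] trd_Bil)
  moreover have "(\<forall>v. trd d N (v * L \<alpha> \<beta> u) = 0) \<longleftrightarrow> L \<alpha> \<beta> u = 0" for u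
    using trd_nondeg[OF d_pos dN] by (auto simp: trd_def power_0_left)
  ultimately show ?thesis by (auto simp: W_def)
qed

lemma card_W_sympl: "\<exists>j. 2 ^ n = (2 ^ d) ^ (2 * j) * card (W \<alpha> \<beta>)"
proof -
  have "\<exists>j. card (UNIV::'a set) = card Kd ^ (2 * j) * card {u\<in>UNIV. \<forall>v\<in>UNIV. Bd \<alpha> \<beta> u v = 0}"
  proof (rule symp)
    show "0 \<in> Kd" by (rule Kd_0)
    show "1 \<in> Kd" by (rule Kd_1)
    show "\<And>c. c \<in> Kd \<Longrightarrow> inverse c \<in> Kd" by (rule Kd_inv)
    show "\<And>x y. Bd \<alpha> \<beta> x y \<in> Kd" by (simp add: Bd_def Kd_def trd_fix[OF dN])
    show "\<And>x y z. Bd \<alpha> \<beta> (x + y) z = Bd \<alpha> \<beta> x z + Bd \<alpha> \<beta> y z" by (simp add: Bd_def BB_add trd_add)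
    show "\<And>c x y. c \<in> Kd \<Longrightarrow> Bd \<alpha> \<beta> (c * x) y = c * Bd \<alpha> \<beta> x y"
      by (simp add: Bd_def BB_scal trd_scal Kd_def)
    show "\<And>x y. Bd \<alpha> \<beta> x y = Bd \<alpha> \<beta> y x" by (simp add: Bd_def Bil_sym)
    show "\<And>x. Bd \<alpha> \<beta> x x = 0" by (simp add: Bd_def Bil_self trd_def power_0_left)
  qed simp_all
  thus ?thesis using rad_eq[of \<alpha> \<beta>] card_Kd card_q by simp
qed


definition aa :: "'a \<Rightarrow> 'a \<Rightarrow> nat \<Rightarrow> 'a" where
  "aa \<alpha> \<beta> i = (if i = 0 then \<alpha> else if i = 1 then \<beta> ^ (2 ^ k) else if i = 3 then \<beta> ^ (2 ^ (2 * k))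
     else if i = 4 then \<alpha> ^ (2 ^ (2 * k)) else 0)"

lemma lp_aa: "lp k (aa \<alpha> \<beta>) 4 z = \<alpha> * z + \<beta> ^ (2 ^ k) * z ^ (2 ^ k) + \<beta> ^ (2 ^ (2 * k)) * z ^ (2 ^ (3 * k))
    + \<alpha> ^ (2 ^ (2 * k)) * z ^ (2 ^ (4 * k))"
  by (simp add: lp_def aa_def eval_nat_numeral atMost_Suc mult.commute)

lemma lp_aa3: "lp k (aa \<alpha> \<beta>) 3 z = \<alpha> * z + \<beta> ^ (2 ^ k) * z ^ (2 ^ k) + \<beta> ^ (2 ^ (2 * k)) * z ^ (2 ^ (3 * k))"
  by (simp add: lp_def aa_def eval_nat_numeral atMost_Suc mult.commute)

lemma L_pow: "(L \<alpha> \<beta> z) ^ (2 ^ (2 * k)) = lp k (aa \<alpha> \<beta>) 4 z"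
proof -
  have t1: "(\<alpha> * z ^ (2 ^ (2 * k))) ^ (2 ^ (2 * k)) = \<alpha> ^ (2 ^ (2 * k)) * z ^ (2 ^ (4 * k))"
    by (simp add: power_mult_distrib pow2_pow2)
  have t2: "(\<beta> * z ^ (2 ^ k)) ^ (2 ^ (2 * k)) = \<beta> ^ (2 ^ (2 * k)) * z ^ (2 ^ (3 * k))"
    by (simp add: power_mult_distrib pow2_pow2)
  have t3: "((\<alpha> * z) ^ (2 ^ (2 * n - 2 * k))) ^ (2 ^ (2 * k)) = \<alpha> * z"
  proof -
    have "((\<alpha> * z) ^ (2 ^ (2 * n - 2 * k))) ^ (2 ^ (2 * k)) = (\<alpha> * z) ^ (2 ^ (n * 2))"
      using k_le by (simp add: pow2_pow2 mult.commute)
    thus ?thesis by (simp only: fermat_mult)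
  qed
  have t4: "((\<beta> * z) ^ (2 ^ (n - k))) ^ (2 ^ (2 * k)) = \<beta> ^ (2 ^ k) * z ^ (2 ^ k)"
  proof -
    have "((\<beta> * z) ^ (2 ^ (n - k))) ^ (2 ^ (2 * k)) = ((\<beta> * z) ^ (2 ^ n)) ^ (2 ^ k)"
      using k_le by (simp add: pow2_pow2 add.commute)
    thus ?thesis by (simp add: fermat power_mult_distrib)
  qed
  show ?thesis unfolding Lm_def lp_aa frob_add t1 t2 t3 t4 by (simp add: algebra_simps)
qed

lemma W_lp: "W \<alpha> \<beta> = {z. lp k (aa \<alpha> \<beta>) 4 z = 0}"
  unfolding W_def L_pow[symmetric] by simp

lemma card_W_le: assumes "(\<alpha>, \<beta>) \<noteq> (0, 0)" shows "card (W \<alpha> \<beta>) \<le> (2 ^ d) ^ 4"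
proof (cases "\<alpha> = 0")
  case False
  hence "aa \<alpha> \<beta> 4 \<noteq> 0" by (simp add: aa_def)
  from lp_bound[of "aa \<alpha> \<beta>" 4 k, OF this] show ?thesis by (simp add: W_lp Kk_eq card_Kd)
next
  case True
  hence b: "\<beta> \<noteq> 0" using assms by simp
  hence "aa \<alpha> \<beta> 3 \<noteq> 0" by (simp add: aa_def)
  from lp_bound[of "aa \<alpha> \<beta>" 3 k, OF this] have "card {z. lp k (aa \<alpha> \<beta>) 3 z = 0} \<le> (2 ^ d) ^ 3"
    by (simp add: Kk_eq card_Kd)
  moreover have "W \<alpha> \<beta> = {z. lp k (aa \<alpha> \<beta>) 3 z = 0}"
    unfolding W_lp lp_aa lp_aa3 using True by (simp add: power_0_left)
  moreover have "((2::nat) ^ d) ^ 3 \<le> (2 ^ d) ^ 4" by (rule power_increasing) simp_all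
  ultimately show ?thesis by simp
qed

lemma N_ge5: "N \<ge> 5"
proof -
  have "d \<le> k" using d_dvd_k k_ge by (simp add: dvd_imp_le)
  hence "d < n" using k_le n_pos by linarith
  hence "N \<noteq> 1" using dN by auto
  moreover have "N \<noteq> 3"
  proof
    assume N3: "N = 3"
    obtain t where t: "k = d * t" using d_dvd_k by blast
    have "d * t < d * 3" using t k_le dN N3 n_pos by simp
    hence "t < 3" by simp
    moreover have "t \<noteq> 0" using t k_ge by auto
    ultimately have "t = 1 \<or> t = 2" by auto
    thus False using t k3 dN N3 by auto
  qed
  moreover have "N \<noteq> 0" using dN n_pos by auto
  ultimately show ?thesis using oddN by presburger
qed

lemma card_W_cases:
  assumes "(\<alpha>, \<beta>) \<noteq> (0, 0)"
  shows "card (W \<alpha> \<beta>) = 2 ^ d \<or> card (W \<alpha> \<beta>) = 2 ^ (3 * d)"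
proof -
  obtain j where j: "2 ^ n = (2 ^ d) ^ (2 * j) * card (W \<alpha> \<beta>)" using card_W_sympl by blast
  have cw: "card (W \<alpha> \<beta>) \<ge> 1" using W_zero[of \<alpha> \<beta>] by (metis One_nat_def Suc_leI card_gt_0_iff empty_iff finite)
  have j2: "(2::nat) ^ n = 2 ^ (d * (2 * j)) * card (W \<alpha> \<beta>)" using j by (simp add: power_mult)
  hence "(2::nat) ^ (d * (2 * j)) \<le> 2 ^ n" using cw by (metis mult_le_mono2 mult.right_neutral)
  hence le: "d * (2 * j) \<le> d * N" using dN by simp
  hence le2: "2 * j \<le> N" using d_pos by simp
  have "(2::nat) ^ n = 2 ^ (d * (2 * j)) * 2 ^ (d * (N - 2 * j))"
    using le2 dN by (simp add: power_add[symmetric] diff_mult_distrib2[symmetric] add_mult_distrib2[symmetric])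
  with j2 have cwe: "card (W \<alpha> \<beta>) = 2 ^ (d * (N - 2 * j))" by simp
  have "(2::nat) ^ (d * (N - 2 * j)) \<le> 2 ^ (d * 4)"
    using card_W_le[OF assms] cwe by (simp add: power_mult)
  hence "d * (N - 2 * j) \<le> d * 4" by simp
  hence "N - 2 * j \<le> 4" using d_pos by simp
  moreover have "odd (N - 2 * j)" using oddN le2 by simp
  ultimately have "N - 2 * j = 1 \<or> N - 2 * j = 3" by presburger
  thus ?thesis using cwe by (auto simp: mult.commute)
qed

end

context gfkp
begin

lemma AB_set:
  assumes z: "(z::'a) \<noteq> 0"
  shows "{y. y ^ (2 ^ (2 * k)) * z + y * z ^ (2 ^ (2 * k)) = 0 \<and> y ^ (2 ^ k) * z + y * z ^ (2 ^ k) = 0}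
         = (\<lambda>t. t * z) ` Kd"
proof
  show "(\<lambda>t. t * z) ` Kd \<subseteq> {y. y ^ (2 ^ (2 * k)) * z + y * z ^ (2 ^ (2 * k)) = 0 \<and> y ^ (2 ^ k) * z + y * z ^ (2 ^ k) = 0}"
  proof
    fix y assume "y \<in> (\<lambda>t. t * z) ` Kd"
    then obtain t where t: "t \<in> Kd" "y = t * z" by blast
    have "d dvd 2 * k" "d dvd k" using d_dvd_k by simp_all
    hence e: "t ^ (2 ^ (2 * k)) = t" "t ^ (2 ^ k) = t" using Kd_pow[OF t(1)] by blast+
    show "y \<in> {y. y ^ (2 ^ (2 * k)) * z + y * z ^ (2 ^ (2 * k)) = 0 \<and> y ^ (2 ^ k) * z + y * z ^ (2 ^ k) = 0}"
      using e by (simp add: t(2) power_mult_distrib algebra_simps)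
  qed
  show "{y. y ^ (2 ^ (2 * k)) * z + y * z ^ (2 ^ (2 * k)) = 0 \<and> y ^ (2 ^ k) * z + y * z ^ (2 ^ k) = 0} \<subseteq> (\<lambda>t. t * z) ` Kd"
  proof
    fix y assume "y \<in> {y. y ^ (2 ^ (2 * k)) * z + y * z ^ (2 ^ (2 * k)) = 0 \<and> y ^ (2 ^ k) * z + y * z ^ (2 ^ k) = 0}"
    hence "y ^ (2 ^ k) * z + y * z ^ (2 ^ k) = 0" by simp
    hence B: "y ^ (2 ^ k) * z = y * z ^ (2 ^ k)" by (metis add_left_cancel add_self)
    define t where "t = y / z"
    have "t ^ (2 ^ k) = y ^ (2 ^ k) * z / (z ^ (2 ^ k) * z)"
      using z by (simp add: t_def power_divide)
    also have "\<dots> = t" using z B by (simp add: t_def)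
    finally have "t \<in> Kd" using Kk_iff by blast
    moreover have "y = t * z" using z by (simp add: t_def)
    ultimately show "y \<in> (\<lambda>t. t * z) ` Kd" by blast
  qed
qed

lemma card_AB:
  assumes z: "(z::'a) \<noteq> 0"
  shows "card {y. y ^ (2 ^ (2 * k)) * z + y * z ^ (2 ^ (2 * k)) = 0 \<and> y ^ (2 ^ k) * z + y * z ^ (2 ^ k) = 0} = 2 ^ d"
proof -
  have "inj_on (\<lambda>t. t * z) Kd" using z by (auto intro: inj_onI)
  thus ?thesis unfolding AB_set[OF z] by (simp add: card_image card_Kd)
qed

lemma cnt_z:
  "(\<Sum>\<alpha>\<in>UNIV. \<Sum>\<beta>\<in>UNIV. (if L \<alpha> \<beta> z = 0 then 1 else 0::int))
     = (if z = 0 then 2 ^ (2 * n) else 2 ^ (n + d))"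
proof (cases "z = 0")
  case True
  thus ?thesis using card_q by (simp add: power_add[symmetric] mult_2)
next
  case False
  define A where "A y = y ^ (2 ^ (2 * k)) * z + y * z ^ (2 ^ (2 * k))" for y
  define B where "B y = y ^ (2 ^ k) * z + y * z ^ (2 ^ k)" for y
  have eyl: "e (y * L \<alpha> \<beta> z) = e (A y * \<alpha>) * e (B y * \<beta>)" for y \<alpha> \<beta>
  proof -
    have "e (y * L \<alpha> \<beta> z) = e (BB \<alpha> \<beta> y z)" by (simp add: e_Bil)
    also have "BB \<alpha> \<beta> y z = A y * \<alpha> + B y * \<beta>" by (simp add: Bil_def A_def B_def algebra_simps)
    finally show ?thesis by (simp add: e_add)
  qed
  have "2 ^ n * (\<Sum>\<alpha>\<in>UNIV. \<Sum>\<beta>\<in>UNIV. (if L \<alpha> \<beta> z = 0 then 1 else 0::int))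
      = (\<Sum>\<alpha>\<in>UNIV. \<Sum>\<beta>\<in>UNIV. \<Sum>y\<in>UNIV. e (L \<alpha> \<beta> z * y))"
  proof -
    have "\<And>\<alpha> \<beta>. 2 ^ n * (if L \<alpha> \<beta> z = 0 then 1 else 0::int) = (\<Sum>y\<in>UNIV. e (L \<alpha> \<beta> z * y))"
      by (simp add: char_sum)
    thus ?thesis by (simp add: sum_distrib_left)
  qed
  also have "\<dots> = (\<Sum>y\<in>UNIV. (\<Sum>\<alpha>\<in>UNIV. e (A y * \<alpha>)) * (\<Sum>\<beta>\<in>UNIV. e (B y * \<beta>)))"
  proof -
    have "(\<Sum>\<alpha>\<in>UNIV. \<Sum>\<beta>\<in>UNIV. \<Sum>y\<in>UNIV. e (L \<alpha> \<beta> z * y))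
        = (\<Sum>y\<in>UNIV. \<Sum>\<alpha>\<in>UNIV. \<Sum>\<beta>\<in>UNIV. e (L \<alpha> \<beta> z * y))"
    proof -
      have "(\<Sum>\<alpha>\<in>UNIV. \<Sum>\<beta>\<in>UNIV. \<Sum>y\<in>UNIV. e (L \<alpha> \<beta> z * y))
          = (\<Sum>\<alpha>\<in>UNIV. \<Sum>y\<in>UNIV. \<Sum>\<beta>\<in>UNIV. e (L \<alpha> \<beta> z * y))"
        by (rule sum.cong[OF refl], rule sum.swap)
      also have "\<dots> = (\<Sum>y\<in>UNIV. \<Sum>\<alpha>\<in>UNIV. \<Sum>\<beta>\<in>UNIV. e (L \<alpha> \<beta> z * y))"
        by (rule sum.swap)
      finally show ?thesis .
    qed
    also have "\<dots> = (\<Sum>y\<in>UNIV. \<Sum>\<alpha>\<in>UNIV. \<Sum>\<beta>\<in>UNIV. e (A y * \<alpha>) * e (B y * \<beta>))"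
      by (simp add: eyl mult.commute)
    also have "\<dots> = (\<Sum>y\<in>UNIV. (\<Sum>\<alpha>\<in>UNIV. e (A y * \<alpha>)) * (\<Sum>\<beta>\<in>UNIV. e (B y * \<beta>)))"
      by (simp add: sum_product)
    finally show ?thesis .
  qed
  also have "\<dots> = (\<Sum>y\<in>UNIV. if A y = 0 \<and> B y = 0 then 2 ^ (2 * n) else 0)"
    by (rule sum.cong) (auto simp: char_sum power_add[symmetric] mult_2)
  also have "\<dots> = 2 ^ (2 * n) * int (card {y. A y = 0 \<and> B y = 0})"
    by (simp add: sum.If_cases)
  also have "card {y. A y = 0 \<and> B y = 0} = 2 ^ d"
    using card_AB[OF False] by (simp add: A_def B_def)
  finally have "2 ^ n * (\<Sum>\<alpha>\<in>UNIV. \<Sum>\<beta>\<in>UNIV. (if L \<alpha> \<beta> z = 0 then 1 else 0::int)) = 2 ^ n * 2 ^ (n + d)"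
    by (simp add: power_add mult_2)
  thus ?thesis using False by simp
qed

lemma moment:
  "(\<Sum>\<alpha>\<in>UNIV. \<Sum>\<beta>\<in>UNIV. int (card (W \<alpha> \<beta>))) = 2 ^ (2 * n) + (2 ^ n - 1) * 2 ^ (n + d)"
proof -
  have "(\<Sum>\<alpha>\<in>UNIV. \<Sum>\<beta>\<in>UNIV. int (card (W \<alpha> \<beta>)))
     = (\<Sum>\<alpha>\<in>UNIV. \<Sum>\<beta>\<in>UNIV. \<Sum>z\<in>UNIV. (if L \<alpha> \<beta> z = 0 then 1 else 0::int))"
    by (simp add: W_def sum.If_cases)
  also have "\<dots> = (\<Sum>z\<in>UNIV. \<Sum>\<alpha>\<in>UNIV. \<Sum>\<beta>\<in>UNIV. (if L \<alpha> \<beta> z = 0 then 1 else 0::int))"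
  proof -
    have "(\<Sum>\<alpha>\<in>UNIV. \<Sum>\<beta>\<in>UNIV. \<Sum>z\<in>UNIV. (if L \<alpha> \<beta> z = 0 then 1 else 0::int))
        = (\<Sum>\<alpha>\<in>UNIV. \<Sum>z\<in>UNIV. \<Sum>\<beta>\<in>UNIV. (if L \<alpha> \<beta> z = 0 then 1 else 0::int))"
      by (rule sum.cong[OF refl], rule sum.swap)
    also have "\<dots> = (\<Sum>z\<in>UNIV. \<Sum>\<alpha>\<in>UNIV. \<Sum>\<beta>\<in>UNIV. (if L \<alpha> \<beta> z = 0 then 1 else 0::int))"
      by (rule sum.swap)
    finally show ?thesis .
  qed
  also have "\<dots> = (\<Sum>z\<in>UNIV. (if z = (0::'a) then 2 ^ (2 * n) else 2 ^ (n + d)))"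
    by (simp add: cnt_z)
  also have "\<dots> = 2 ^ (2 * n) + int (card (UNIV - {0::'a})) * 2 ^ (n + d)"
    by (simp add: sum.If_cases Diff_eq[symmetric])
  also have "int (card (UNIV - {0::'a})) = 2 ^ n - 1" using card_nz by (simp add: of_nat_diff)
  finally show ?thesis .
qed

end

context gfkp
begin

lemma dist_ab:
  assumes cw: "card (W \<alpha> \<beta>) = 2 ^ w" and nw: "n = w + 2 * h" and h: "h \<ge> 1"
  shows "card {\<gamma>. SS \<alpha> \<beta> \<gamma> = 2 ^ (w + h)} = 2 ^ (2 * h - 1) + 2 ^ (h - 1)"
    and "card {\<gamma>. SS \<alpha> \<beta> \<gamma> = - (2 ^ (w + h))} = 2 ^ (2 * h - 1) - 2 ^ (h - 1)"
    and "card {\<gamma>. SS \<alpha> \<beta> \<gamma> = 0} = 2 ^ n - 2 ^ (2 * h)"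
    and "\<And>u. u \<notin> {0, 2 ^ (w + h), - (2 ^ (w + h))} \<Longrightarrow> card {\<gamma>. SS \<alpha> \<beta> \<gamma> = u} = 0"
proof -
  define v :: int where "v = 2 ^ (w + h)"
  have vpos: "v > 0" by (simp add: v_def)
  have v2: "v ^ 2 = 2 ^ n * 2 ^ w"
    by (simp add: v_def nw power_mult[symmetric] power_add[symmetric] algebra_simps)
  have vals: "SS \<alpha> \<beta> \<gamma> = 0 \<or> SS \<alpha> \<beta> \<gamma> = v \<or> SS \<alpha> \<beta> \<gamma> = - v" for \<gamma>
  proof -
    have "(SS \<alpha> \<beta> \<gamma>)^2 = 0 \<or> (SS \<alpha> \<beta> \<gamma>)^2 = v ^ 2" using SS_sq_cases[of \<alpha> \<beta> \<gamma>] cw v2 by simp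
    thus ?thesis by (simp add: power2_eq_iff)
  qed
  define A where "A = card {\<gamma>. SS \<alpha> \<beta> \<gamma> = v}"
  define B where "B = card {\<gamma>. SS \<alpha> \<beta> \<gamma> = - v}"
  define Z where "Z = card {\<gamma>. SS \<alpha> \<beta> \<gamma> = 0}"
  have dec: "SS \<alpha> \<beta> \<gamma> = v * of_bool (SS \<alpha> \<beta> \<gamma> = v) - v * of_bool (SS \<alpha> \<beta> \<gamma> = - v)" for \<gamma>
    using vals[of \<gamma>] vpos by auto
  have dec2: "(SS \<alpha> \<beta> \<gamma>)^2 = v^2 * of_bool (SS \<alpha> \<beta> \<gamma> = v) + v^2 * of_bool (SS \<alpha> \<beta> \<gamma> = - v)" for \<gamma>
    using vals[of \<gamma>] vpos by auto
  have dec1: "(1::int) = of_bool (SS \<alpha> \<beta> \<gamma> = 0) + of_bool (SS \<alpha> \<beta> \<gamma> = v) + of_bool (SS \<alpha> \<beta> \<gamma> = - v)" for \<gamma>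
    using vals[of \<gamma>] vpos by auto
  have s1: "(\<Sum>\<gamma>\<in>UNIV. SS \<alpha> \<beta> \<gamma>) = v * int A - v * int B"
    by (subst dec) (simp add: sum_subtractf sum_distrib_left[symmetric] A_def B_def)
  have s2: "(\<Sum>\<gamma>\<in>UNIV. (SS \<alpha> \<beta> \<gamma>)^2) = v^2 * int A + v^2 * int B"
    by (subst dec2) (simp add: sum.distrib sum_distrib_left[symmetric] A_def B_def)
  have s0: "(\<Sum>\<gamma>\<in>(UNIV::'a set). (1::int)) = int Z + int A + int B"
  proof -
    have "(\<Sum>\<gamma>\<in>(UNIV::'a set). (1::int)) = (\<Sum>\<gamma>\<in>UNIV. of_bool (SS \<alpha> \<beta> \<gamma> = 0) + of_bool (SS \<alpha> \<beta> \<gamma> = v) + of_bool (SS \<alpha> \<beta> \<gamma> = - v))"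
      by (rule sum.cong[OF refl]) (rule dec1)
    thus ?thesis by (simp add: sum.distrib Z_def A_def B_def)
  qed
  have e1: "v * (int A - int B) = 2 ^ n" using s1 SS_sum by (simp add: algebra_simps)
  have e2: "v^2 * (int A + int B) = 2 ^ (2 * n)" using s2 SS_sq_sum by (simp add: algebra_simps)
  have "v * (int A - int B) = v * 2 ^ h"
    using e1 by (simp add: v_def nw power_add[symmetric] mult_2 add.assoc)
  hence AB1: "int A - int B = 2 ^ h" using vpos by simp
  have "v^2 * (int A + int B) = v^2 * 2 ^ (2 * h)"
    using e2 by (simp add: v_def nw power_mult[symmetric] power_add[symmetric] algebra_simps)
  hence AB2: "int A + int B = 2 ^ (2 * h)" using vpos by simp
  have h1: "(2::int) ^ (2 * h) = 2 * 2 ^ (2 * h - 1)" "(2::int) ^ h = 2 * 2 ^ (h - 1)"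
    using h by (simp_all add: power_Suc[symmetric] del: power_Suc)
  have "int A = 2 ^ (2 * h - 1) + 2 ^ (h - 1)" using AB1 AB2 h1 by linarith
  hence "int A = int (2 ^ (2 * h - 1) + 2 ^ (h - 1))" by simp
  hence "A = 2 ^ (2 * h - 1) + 2 ^ (h - 1)" by (simp only: of_nat_eq_iff)
  thus "card {\<gamma>. SS \<alpha> \<beta> \<gamma> = 2 ^ (w + h)} = 2 ^ (2 * h - 1) + 2 ^ (h - 1)"
    unfolding A_def v_def .
  have "int B = 2 ^ (2 * h - 1) - 2 ^ (h - 1)" using AB1 AB2 h1 by linarith
  moreover have "(2::nat) ^ (h - 1) \<le> 2 ^ (2 * h - 1)" by (rule power_increasing) auto
  ultimately have "int B = int (2 ^ (2 * h - 1) - 2 ^ (h - 1))" by (simp add: of_nat_diff)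
  hence "B = 2 ^ (2 * h - 1) - 2 ^ (h - 1)" by (simp only: of_nat_eq_iff)
  thus "card {\<gamma>. SS \<alpha> \<beta> \<gamma> = - (2 ^ (w + h))} = 2 ^ (2 * h - 1) - 2 ^ (h - 1)"
    unfolding B_def v_def .
  have "int Z = 2 ^ n - 2 ^ (2 * h)" using s0 AB2 card_q by simp
  moreover have "(2::nat) ^ (2 * h) \<le> 2 ^ n" using nw by (intro power_increasing) auto
  ultimately have "int Z = int (2 ^ n - 2 ^ (2 * h))" by (simp add: of_nat_diff)
  hence "Z = 2 ^ n - 2 ^ (2 * h)" by (simp only: of_nat_eq_iff)
  thus "card {\<gamma>. SS \<alpha> \<beta> \<gamma> = 0} = 2 ^ n - 2 ^ (2 * h)"
    unfolding Z_def .
  fix u :: int assume "u \<notin> {0, 2 ^ (w + h), - (2 ^ (w + h))}"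
  hence "{\<gamma>. SS \<alpha> \<beta> \<gamma> = u} = {}"
  proof (intro equalityI subsetI)
    fix \<gamma> assume "\<gamma> \<in> {\<gamma>. SS \<alpha> \<beta> \<gamma> = u}"
    hence "SS \<alpha> \<beta> \<gamma> = u" by simp
    thus "\<gamma> \<in> {}" using vals[of \<gamma>] \<open>u \<notin> _\<close> by (simp add: v_def)
  qed simp
  thus "card {\<gamma>. SS \<alpha> \<beta> \<gamma> = u} = 0" by simp
qed

end

context gfkp
begin

lemma SS00: "SS 0 0 \<gamma> = (if \<gamma> = 0 then 2 ^ n else 0)"
  unfolding SS_def using char_sum[of \<gamma>] by (simp add: Qf_def power_0_left)

lemma card00: "card {\<gamma>. SS 0 0 \<gamma> = u} = (if u = 2 ^ n then 1 else 0) + (if u = 0 then 2 ^ n - 1 else 0)"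
proof -
  have nz: "(2::int) ^ n \<noteq> 0" by simp
  show ?thesis
  proof (cases "u = 2 ^ n")
    case True
    hence "{\<gamma>. SS 0 0 \<gamma> = u} = {0}" by (auto simp: SS00)
    thus ?thesis using True nz by simp
  next
    case False
    show ?thesis
    proof (cases "u = 0")
      case True
      hence "{\<gamma>. SS 0 0 \<gamma> = u} = UNIV - {0}" by (auto simp: SS00)
      thus ?thesis using True card_nz by simp
    next
      case F2: False
      hence "{\<gamma>. SS 0 0 \<gamma> = u} = {}" using False by (auto simp: SS00)
      thus ?thesis using False F2 by simp
    qed
  qed
qed

lemma W00: "W 0 0 = UNIV" by (simp add: W_def Lm_def power_0_left)

definition P1 :: "('a \<times> 'a) set" where
  "P1 = {ab. ab \<noteq> (0, 0) \<and> card (W (fst ab) (snd ab)) = 2 ^ d}"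
definition P3 :: "('a \<times> 'a) set" where
  "P3 = {ab. ab \<noteq> (0, 0) \<and> card (W (fst ab) (snd ab)) = 2 ^ (3 * d)}"

lemma d_ne_3d: "(2::nat) ^ d \<noteq> 2 ^ (3 * d)" using d_pos by simp

lemma UNIV_part: "(UNIV :: ('a \<times> 'a) set) = insert (0, 0) (P1 \<union> P3)"
proof (intro equalityI subsetI)
  fix ab :: "'a \<times> 'a" assume "ab \<in> UNIV"
  show "ab \<in> insert (0, 0) (P1 \<union> P3)"
  proof (cases "ab = (0, 0)")
    case False
    hence "(fst ab, snd ab) \<noteq> (0, 0)" by simp
    from card_W_cases[OF this] show ?thesis using False by (auto simp: P1_def P3_def)
  qed simp
qed simp

lemma sum_part:
  fixes f :: "'a \<times> 'a \<Rightarrow> int"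
  shows "(\<Sum>ab\<in>UNIV. f ab) = f (0, 0) + (\<Sum>ab\<in>P1. f ab) + (\<Sum>ab\<in>P3. f ab)"
proof -
  have disj: "P1 \<inter> P3 = {}" using d_ne_3d by (auto simp: P1_def P3_def)
  have "(0, 0) \<notin> P1 \<union> P3" by (simp add: P1_def P3_def)
  hence "(\<Sum>ab\<in>UNIV. f ab) = f (0, 0) + (\<Sum>ab\<in>P1 \<union> P3. f ab)"
    by (subst UNIV_part) simp
  also have "(\<Sum>ab\<in>P1 \<union> P3. f ab) = (\<Sum>ab\<in>P1. f ab) + (\<Sum>ab\<in>P3. f ab)"
    by (rule sum.union_disjoint) (simp_all add: disj)
  finally show ?thesis by simp
qed

lemma sum_classes:
  fixes f :: "'a \<times> 'a \<Rightarrow> int"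
  assumes "\<And>ab. ab \<in> P1 \<Longrightarrow> f ab = c1" "\<And>ab. ab \<in> P3 \<Longrightarrow> f ab = c3"
  shows "(\<Sum>ab\<in>UNIV. f ab) = f (0, 0) + int (card P1) * c1 + int (card P3) * c3"
  using assms by (simp add: sum_part)

lemma sum_pairs:
  fixes g :: "'a \<Rightarrow> 'a \<Rightarrow> int"
  shows "(\<Sum>a\<in>UNIV. \<Sum>b\<in>UNIV. g a b) = (\<Sum>ab\<in>UNIV. g (fst ab) (snd ab))"
  by (simp add: sum.cartesian_product split_beta UNIV_Times_UNIV[symmetric] del: UNIV_Times_UNIV)

lemma n1n3: "int (card P1) + int (card P3) = 2 ^ (2 * n) - 1"
proof -
  have "(\<Sum>ab\<in>(UNIV::('a\<times>'a) set). (1::int)) = 1 + int (card P1) + int (card P3)"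
    using sum_classes[of "\<lambda>_. (1::int)" 1 1] by simp
  moreover have "(\<Sum>ab\<in>(UNIV::('a\<times>'a) set). (1::int)) = 2 ^ (2 * n)"
    using card_q by (simp add: card_prod power_add[symmetric] mult_2 del: UNIV_Times_UNIV)
  ultimately show ?thesis by simp
qed

lemma moment2: "2 ^ n + int (card P1) * 2 ^ d + int (card P3) * 2 ^ (3 * d) = 2 ^ (2 * n) + (2 ^ n - 1) * 2 ^ (n + d)"
proof -
  have "(\<Sum>ab\<in>UNIV. int (card (W (fst ab) (snd ab)))) = int (card (W 0 0)) + int (card P1) * 2 ^ d + int (card P3) * 2 ^ (3 * d)"
    using sum_classes[of "\<lambda>ab. int (card (W (fst ab) (snd ab)))" "2 ^ d" "2 ^ (3 * d)"]
    by (simp add: P1_def P3_def)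
  moreover have "int (card (W (0::'a) 0)) = 2 ^ n" using card_q by (simp add: W00)
  ultimately show ?thesis using moment by (simp add: sum_pairs)
qed

end

lemma sum_pairs_gen:
  fixes g :: "'b::finite \<Rightarrow> 'c::finite \<Rightarrow> int"
  shows "(\<Sum>a\<in>UNIV. \<Sum>b\<in>UNIV. g a b) = (\<Sum>ab\<in>UNIV. g (fst ab) (snd ab))"
  by (simp add: sum.cartesian_product split_beta UNIV_Times_UNIV[symmetric] del: UNIV_Times_UNIV)

context gfkp
begin

definition h1 where "h1 = (n - d) div 2"
definition h3 where "h3 = (n - 3 * d) div 2"

lemma h_facts: "n = d + 2 * h1" "n = 3 * d + 2 * h3" "h1 \<ge> 1" "h3 \<ge> 1"
  "(n + d) div 2 = d + h1" "(n + 3 * d) div 2 = 3 * d + h3"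
proof -
  obtain m where m: "N = 2 * m + 1" using oddN by (metis oddE)
  have m2: "m \<ge> 2" using N_ge5 m by simp
  have n: "n = d * (2 * m + 1)" using dN m by simp
  have "n - d = 2 * (d * m)" using n by (simp add: algebra_simps)
  hence hh1: "h1 = d * m" by (simp add: h1_def)
  have "n - 3 * d = 2 * (d * (m - 1))" using n m2 by (simp add: algebra_simps diff_mult_distrib2)
  hence hh3: "h3 = d * (m - 1)" by (simp add: h3_def)
  show "n = d + 2 * h1" using n hh1 by (simp add: algebra_simps)
  show "n = 3 * d + 2 * h3" using n hh3 m2 by (simp add: algebra_simps diff_mult_distrib2)
  show "h1 \<ge> 1" using hh1 d_pos m2 by simp
  show "h3 \<ge> 1" using hh3 d_pos m2 by simp
  show "(n + d) div 2 = d + h1" using n hh1 by (simp add: algebra_simps)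
  show "(n + 3 * d) div 2 = 3 * d + h3" using n hh3 m2 by (simp add: algebra_simps diff_mult_distrib2)
qed

abbreviation "v1 \<equiv> (2::int) ^ (d + h1)"
abbreviation "v3 \<equiv> (2::int) ^ (3 * d + h3)"

lemma exps: "d + h1 < n" "3 * d + h3 < n" "d + h1 < 3 * d + h3"
  using h_facts d_pos by linarith+

lemma v_distinct: "v1 \<noteq> 2 ^ n" "v3 \<noteq> 2 ^ n" "v1 \<noteq> v3" "v1 \<noteq> - v3" "v1 \<noteq> - v1" "v3 \<noteq> - v3"
  "- v1 \<noteq> 2 ^ n" "- v3 \<noteq> 2 ^ n" "v1 \<noteq> 0" "v3 \<noteq> 0" "(2::int) ^ n \<noteq> 0"
proof -
  have pos: "(0::int) < 2 ^ j" for j :: nat by simp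
  have inj: "(2::int) ^ a = 2 ^ b \<longleftrightarrow> a = b" for a b :: nat by simp
  show "v1 \<noteq> 2 ^ n" "v3 \<noteq> 2 ^ n" "v1 \<noteq> v3" using exps inj by (metis less_irrefl)+
  show "v1 \<noteq> - v3" "v1 \<noteq> - v1" "v3 \<noteq> - v3" "- v1 \<noteq> 2 ^ n" "- v3 \<noteq> 2 ^ n"
    using pos by (metis neg_less_0_iff_less less_asym add_less_same_cancel1 add.inverse_neutral
        neg_0_less_iff_less)+
  show "v1 \<noteq> 0" "v3 \<noteq> 0" "(2::int) ^ n \<noteq> 0" by simp_all
qed

lemma cnt_P1:
  assumes "ab \<in> P1"
  shows "int (card {\<gamma>. SS (fst ab) (snd ab) \<gamma> = u}) =
    (if u = v1 then 2 ^ (2 * h1 - 1) + 2 ^ (h1 - 1) else if u = - v1 then 2 ^ (2 * h1 - 1) - 2 ^ (h1 - 1)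
     else if u = 0 then 2 ^ n - 2 ^ (2 * h1) else 0)"
proof -
  have cw: "card (W (fst ab) (snd ab)) = 2 ^ d" using assms by (simp add: P1_def)
  note D = dist_ab[OF cw h_facts(1) h_facts(3)]
  have le1: "(2::nat) ^ (h1 - 1) \<le> 2 ^ (2 * h1 - 1)" by (rule power_increasing) auto
  have le2: "(2::nat) ^ (2 * h1) \<le> 2 ^ n" by (rule power_increasing) (use h_facts in auto)
  show ?thesis using D v_distinct le1 le2 by (auto simp: of_nat_diff)
qed

lemma cnt_P3:
  assumes "ab \<in> P3"
  shows "int (card {\<gamma>. SS (fst ab) (snd ab) \<gamma> = u}) =
    (if u = v3 then 2 ^ (2 * h3 - 1) + 2 ^ (h3 - 1) else if u = - v3 then 2 ^ (2 * h3 - 1) - 2 ^ (h3 - 1)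
     else if u = 0 then 2 ^ n - 2 ^ (2 * h3) else 0)"
proof -
  have cw: "card (W (fst ab) (snd ab)) = 2 ^ (3 * d)" using assms by (simp add: P3_def)
  note D = dist_ab[OF cw h_facts(2) h_facts(4)]
  have le1: "(2::nat) ^ (h3 - 1) \<le> 2 ^ (2 * h3 - 1)" by (rule power_increasing) auto
  have le2: "(2::nat) ^ (2 * h3) \<le> 2 ^ n" by (rule power_increasing) (use h_facts in auto)
  show ?thesis using D v_distinct le1 le2 by (auto simp: of_nat_diff)
qed

lemma cnt_00: "int (card {\<gamma>. SS 0 0 \<gamma> = u}) = (if u = 2 ^ n then 1 else 0) + (if u = 0 then 2 ^ n - 1 else 0)"
  using card00[of u] n_pos by (simp add: of_nat_diff)

lemma total_count:
  "int (card {t :: 'a \<times> 'a \<times> 'a. SS (fst t) (fst (snd t)) (snd (snd t)) = u})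
    = (\<Sum>ab\<in>UNIV. int (card {\<gamma>. SS (fst ab) (snd ab) \<gamma> = u}))"
proof -
  have "int (card {t :: 'a \<times> 'a \<times> 'a. SS (fst t) (fst (snd t)) (snd (snd t)) = u})
      = (\<Sum>t\<in>UNIV. (of_bool (SS (fst t) (fst (snd t)) (snd (snd t)) = u)::int))"
    by simp
  also have "\<dots> = (\<Sum>a\<in>UNIV. \<Sum>bc\<in>UNIV. (of_bool (SS a (fst bc) (snd bc) = u)::int))"
    using sum_pairs_gen[of "\<lambda>a bc. (of_bool (SS a (fst bc) (snd bc) = u)::int)"] by (simp del: sum_of_bool_eq)
  also have "\<dots> = (\<Sum>a\<in>UNIV. \<Sum>b\<in>UNIV. \<Sum>c\<in>UNIV. (of_bool (SS a b c = u)::int))"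
  proof (rule sum.cong[OF refl])
    fix a
    show "(\<Sum>bc\<in>UNIV. (of_bool (SS a (fst bc) (snd bc) = u)::int)) = (\<Sum>b\<in>UNIV. \<Sum>c\<in>UNIV. (of_bool (SS a b c = u)::int))"
      by (subst sum_pairs_gen) (rule refl)
  qed
  also have "\<dots> = (\<Sum>a\<in>UNIV. \<Sum>b\<in>UNIV. int (card {c. SS a b c = u}))"
    by simp
  also have "\<dots> = (\<Sum>ab\<in>UNIV. int (card {\<gamma>. SS (fst ab) (snd ab) \<gamma> = u}))"
    using sum_pairs_gen[of "\<lambda>a b. int (card {c. SS a b c = u})"] by simp
  finally show ?thesis .
qed

lemma total_classes:
  "int (card {t :: 'a \<times> 'a \<times> 'a. SS (fst t) (fst (snd t)) (snd (snd t)) = u})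
   = ((if u = 2 ^ n then 1 else 0) + (if u = 0 then 2 ^ n - 1 else 0))
     + int (card P1) * (if u = v1 then 2 ^ (2 * h1 - 1) + 2 ^ (h1 - 1) else if u = - v1 then 2 ^ (2 * h1 - 1) - 2 ^ (h1 - 1)
          else if u = 0 then 2 ^ n - 2 ^ (2 * h1) else 0)
     + int (card P3) * (if u = v3 then 2 ^ (2 * h3 - 1) + 2 ^ (h3 - 1) else if u = - v3 then 2 ^ (2 * h3 - 1) - 2 ^ (h3 - 1)
          else if u = 0 then 2 ^ n - 2 ^ (2 * h3) else 0)"
  unfolding total_count
  by (rule trans[OF sum_classes]) (simp_all add: cnt_P1 cnt_P3 cnt_00)

end

context gfkp
begin

abbreviation SS3 :: "'a \<times> 'a \<times> 'a \<Rightarrow> int" where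
  "SS3 t \<equiv> SS (fst t) (fst (snd t)) (snd (snd t))"

lemma S_sum_SS: "S_sum n k a b c = SS a b c"
  by (simp add: S_sum_def SS_def e_def Qf_def)

lemma weight_card:
  "card {i. i < 2 ^ n - 1 \<and> cw n k p \<alpha> \<beta> \<gamma> i \<noteq> 0} = card {x. Tr (Q \<alpha> \<beta> x + \<gamma> * x) \<noteq> 0}"
proof -
  define f where "f x = Q \<alpha> \<beta> x + \<gamma> * x" for x
  have cwf: "cw n k p \<alpha> \<beta> \<gamma> i = Tr (f (p ^ i))" for i
    by (simp only: cw_def f_def Qf_def power_mult[of p i])
  have img: "(\<lambda>i. p ^ i) ` {i. i < 2 ^ n - 1 \<and> cw n k p \<alpha> \<beta> \<gamma> i \<noteq> 0} = {x. Tr (f x) \<noteq> 0}"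
  proof (intro equalityI subsetI)
    fix x assume "x \<in> (\<lambda>i. p ^ i) ` {i. i < 2 ^ n - 1 \<and> cw n k p \<alpha> \<beta> \<gamma> i \<noteq> 0}"
    thus "x \<in> {x. Tr (f x) \<noteq> 0}" by (auto simp: cwf)
  next
    fix x assume x: "x \<in> {x. Tr (f x) \<noteq> 0}"
    have "x \<noteq> 0"
    proof
      assume "x = 0"
      hence "f x = 0" by (simp add: f_def)
      thus False using x by (simp add: tr_def power_0_left)
    qed
    hence "x \<in> (\<lambda>i. p ^ i) ` {..<2 ^ n - 1}" using p_image by blast
    then obtain i where "i < 2 ^ n - 1" "x = p ^ i" by blast
    thus "x \<in> (\<lambda>i. p ^ i) ` {i. i < 2 ^ n - 1 \<and> cw n k p \<alpha> \<beta> \<gamma> i \<noteq> 0}"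
      using x by (auto simp: cwf)
  qed
  have "inj_on (\<lambda>i. p ^ i) {i. i < 2 ^ n - 1 \<and> cw n k p \<alpha> \<beta> \<gamma> i \<noteq> 0}"
    by (rule inj_on_subset[OF p_inj]) auto
  hence "card {i. i < 2 ^ n - 1 \<and> cw n k p \<alpha> \<beta> \<gamma> i \<noteq> 0}
       = card ((\<lambda>i. p ^ i) ` {i. i < 2 ^ n - 1 \<and> cw n k p \<alpha> \<beta> \<gamma> i \<noteq> 0})"
    by (simp add: card_image)
  thus ?thesis using img by (simp add: f_def)
qed

lemma weight: "int (cw_weight n k p \<alpha> \<beta> \<gamma>) = 2 ^ (n - 1) - SS \<alpha> \<beta> \<gamma> div 2"
proof -
  define f where "f x = Q \<alpha> \<beta> x + \<gamma> * x" for x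
  define c where "c = card {x. Tr (f x) \<noteq> 0}"
  have wc: "cw_weight n k p \<alpha> \<beta> \<gamma> = c"
    unfolding cw_weight_def c_def f_def by (rule weight_card)
  have dec: "e (f x) = 1 - 2 * of_bool (Tr (f x) \<noteq> 0)" for x
    by (simp add: e_def sgn2_def)
  have "SS \<alpha> \<beta> \<gamma> = (\<Sum>x\<in>UNIV. 1 - 2 * (of_bool (Tr (f x) \<noteq> 0)::int))"
    unfolding SS_def f_def[symmetric] by (rule sum.cong[OF refl]) (rule dec)
  also have "\<dots> = 2 ^ n - 2 * int c"
    by (simp add: sum_subtractf sum_distrib_left[symmetric] c_def card_q)
  finally have S: "SS \<alpha> \<beta> \<gamma> = 2 * 2 ^ (n - 1) - 2 * int c"
    using n_pos by (simp add: power_Suc[symmetric] del: power_Suc)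
  show ?thesis unfolding wc S by simp
qed

lemma v_distinct': "2 ^ n \<noteq> v1" "2 ^ n \<noteq> v3" "v3 \<noteq> v1" "- v3 \<noteq> v1" "- v1 \<noteq> v1" "- v3 \<noteq> v3"
  "2 ^ n \<noteq> - v1" "2 ^ n \<noteq> - v3" "0 \<noteq> v1" "0 \<noteq> v3" "0 \<noteq> (2::int) ^ n"
  "v3 \<noteq> - v1" "- v1 \<noteq> v3" "- v1 \<noteq> - v3" "- v3 \<noteq> - v1" "v1 \<noteq> - v3" "0 \<noteq> - v1" "0 \<noteq> - v3"
  "- v1 \<noteq> 0" "- v3 \<noteq> 0"
proof -
  have p1: "v1 > 0" and p3: "v3 > 0" and pq: "(2::int) ^ n > 0" by simp_all
  show "2 ^ n \<noteq> v1" using v_distinct(1) by auto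
  show "2 ^ n \<noteq> v3" using v_distinct(2) by auto
  show "v3 \<noteq> v1" using v_distinct(3) by auto
  show "- v1 \<noteq> - v3" using v_distinct(3) by simp
  show "- v3 \<noteq> - v1" using v_distinct(3) by simp
  show "- v3 \<noteq> v1" "- v1 \<noteq> v1" "- v3 \<noteq> v3" "2 ^ n \<noteq> - v1" "2 ^ n \<noteq> - v3" "0 \<noteq> v1" "0 \<noteq> v3"
    "0 \<noteq> (2::int) ^ n" "v3 \<noteq> - v1" "- v1 \<noteq> v3" "v1 \<noteq> - v3" "0 \<noteq> - v1" "0 \<noteq> - v3" "- v1 \<noteq> 0" "- v3 \<noteq> 0"
    using p1 p3 pq by linarith+
qed

lemma cnt_v1: "int (card {t. SS3 t = v1}) = int (card P1) * (2 ^ (2 * h1 - 1) + 2 ^ (h1 - 1))"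
  using total_classes[of v1] v_distinct v_distinct' by simp
lemma cnt_mv1: "int (card {t. SS3 t = - v1}) = int (card P1) * (2 ^ (2 * h1 - 1) - 2 ^ (h1 - 1))"
  using total_classes[of "- v1"] v_distinct v_distinct' by simp
lemma cnt_v3: "int (card {t. SS3 t = v3}) = int (card P3) * (2 ^ (2 * h3 - 1) + 2 ^ (h3 - 1))"
  using total_classes[of v3] v_distinct v_distinct' by simp
lemma cnt_mv3: "int (card {t. SS3 t = - v3}) = int (card P3) * (2 ^ (2 * h3 - 1) - 2 ^ (h3 - 1))"
  using total_classes[of "- v3"] v_distinct v_distinct' by simp
lemma cnt_0: "int (card {t. SS3 t = 0}) = (2 ^ n - 1) + int (card P1) * (2 ^ n - 2 ^ (2 * h1)) + int (card P3) * (2 ^ n - 2 ^ (2 * h3))"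
  using total_classes[of 0] v_distinct v_distinct' by simp
lemma cnt_q: "int (card {t. SS3 t = 2 ^ n}) = 1"
  using total_classes[of "2 ^ n"] v_distinct v_distinct' by simp

lemma SS_vals: "SS3 t \<in> {v1, - v1, v3, - v3, 0, 2 ^ n}"
proof -
  obtain a b c where t: "t = (a, b, c)" by (cases t) auto
  define u where "u = SS a b c"
  have ne: "card {\<gamma>. SS a b \<gamma> = u} \<noteq> 0"
  proof -
    have "c \<in> {\<gamma>. SS a b \<gamma> = u}" by (simp add: u_def)
    thus ?thesis by (auto simp: card_eq_0_iff)
  qed
  have "(a, b) \<in> insert (0, 0) (P1 \<union> P3)" using UNIV_part by blast
  then consider "(a, b) = (0, 0)" | "(a, b) \<in> P1" | "(a, b) \<in> P3" by blast
  hence "u \<in> {v1, - v1, v3, - v3, 0, 2 ^ n}"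
  proof cases
    case 1
    hence "u = 2 ^ n \<or> u = 0" by (simp add: u_def SS00)
    thus ?thesis by blast
  next
    case 2
    have ni: "int (card {\<gamma>. SS a b \<gamma> = u}) \<noteq> 0" using ne by simp
    have eq: "int (card {\<gamma>. SS a b \<gamma> = u}) = (if u = v1 then 2 ^ (2 * h1 - 1) + 2 ^ (h1 - 1) else if u = - v1 then 2 ^ (2 * h1 - 1) - 2 ^ (h1 - 1)
     else if u = 0 then 2 ^ n - 2 ^ (2 * h1) else (0::int))"
      using cnt_P1[OF 2, of u] unfolding fst_conv snd_conv .
    have "(if u = v1 then 2 ^ (2 * h1 - 1) + 2 ^ (h1 - 1) else if u = - v1 then 2 ^ (2 * h1 - 1) - 2 ^ (h1 - 1)
     else if u = 0 then 2 ^ n - 2 ^ (2 * h1) else (0::int)) \<noteq> 0" using ni unfolding eq .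
    hence "u = v1 \<or> u = - v1 \<or> u = 0" by (cases "u = v1"; cases "u = - v1"; cases "u = 0") simp_all
    thus ?thesis by blast
  next
    case 3
    have ni: "int (card {\<gamma>. SS a b \<gamma> = u}) \<noteq> 0" using ne by simp
    have eq: "int (card {\<gamma>. SS a b \<gamma> = u}) = (if u = v3 then 2 ^ (2 * h3 - 1) + 2 ^ (h3 - 1) else if u = - v3 then 2 ^ (2 * h3 - 1) - 2 ^ (h3 - 1)
     else if u = 0 then 2 ^ n - 2 ^ (2 * h3) else (0::int))"
      using cnt_P3[OF 3, of u] unfolding fst_conv snd_conv .
    have "(if u = v3 then 2 ^ (2 * h3 - 1) + 2 ^ (h3 - 1) else if u = - v3 then 2 ^ (2 * h3 - 1) - 2 ^ (h3 - 1)
     else if u = 0 then 2 ^ n - 2 ^ (2 * h3) else (0::int)) \<noteq> 0" using ni unfolding eq .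
    hence "u = v3 \<or> u = - v3 \<or> u = 0" by (cases "u = v3"; cases "u = - v3"; cases "u = 0") simp_all
    thus ?thesis by blast
  qed
  thus ?thesis by (simp add: t u_def)
qed

end

lemma t3: fixes q s u w :: real assumes su: "s * u = 1" and sw: "(s ^ 2 - 1) * w = 1"
  shows "(q - 1) + (q - 1) * (q * s ^ 2 - q - q * u + s ^ 2) * w * (q - q * u)
     + (q - 1) * (q * u - 1) * w * (q - q * u ^ 3)
   = (q - 1) * (q ^ 2 - q ^ 2 * u + q ^ 2 * u ^ 4 + q - q * u - q * u ^ 3 + 1)"
  using su sw by Groebner_Basis.algebra
lemma t3': fixes q s :: real assumes ne: "s ^ 2 - 1 \<noteq> 0" "s \<noteq> 0"
  shows "(q - 1) + (q - 1) * (q * s ^ 2 - q - q / s + s ^ 2) / (s ^ 2 - 1) * (q - q / s)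
     + (q - 1) * (q / s - 1) / (s ^ 2 - 1) * (q - q / s ^ 3)
   = (q - 1) * (q ^ 2 - q ^ 2 / s + q ^ 2 / s ^ 4 + q - q / s - q / s ^ 3 + 1)"
proof -
  define u where "u = inverse s"
  define w where "w = inverse (s ^ 2 - 1)"
  have su: "s * u = 1" using ne by (simp add: u_def)
  have sw: "(s ^ 2 - 1) * w = 1" using ne by (simp add: w_def)
  have d1: "x / s = x * u" "x / s ^ 3 = x * u ^ 3" "x / s ^ 4 = x * u ^ 4" "x / (s ^ 2 - 1) = x * w" for x
    by (simp_all add: u_def w_def divide_inverse power_inverse)
  show ?thesis unfolding d1 using t3[OF su sw, of q] by simp
qed

context gfkp
begin

lemma pow_sub_real: "b \<le> a \<Longrightarrow> (2::real) ^ (a - b) = 2 ^ a / 2 ^ b"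
  by (simp add: power_diff)

lemma real_counts:
  defines "q \<equiv> (2::real) ^ n" and "s \<equiv> (2::real) ^ d"
  shows "real (card P3) = (q - 1) * (q / s - 1) / (s ^ 2 - 1)"
    and "real (card P1) = (q - 1) * (q * s ^ 2 - q - q / s + s ^ 2) / (s ^ 2 - 1)"
proof -
  have "(2::real) ^ 1 \<le> 2 ^ d" using d_pos by (intro power_increasing) auto
  hence s2: "s \<ge> 2" unfolding s_def by simp
  have R1: "real (card P1) + real (card P3) = q ^ 2 - 1"
  proof -
    have "real_of_int (int (card P1) + int (card P3)) = real_of_int (2 ^ (2 * n) - 1)" using n1n3 by simp
    thus ?thesis by (simp add: q_def power_mult mult.commute)
  qed
  have R2: "q + real (card P1) * s + real (card P3) * s ^ 3 = q ^ 2 + (q - 1) * q * s"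
  proof -
    have "real_of_int (2 ^ n + int (card P1) * 2 ^ d + int (card P3) * 2 ^ (3 * d))
        = real_of_int (2 ^ (2 * n) + (2 ^ n - 1) * 2 ^ (n + d))" using moment2 by simp
    thus ?thesis by (simp add: q_def s_def power_mult power_add mult.commute)
  qed
  have "(2::real) ^ 2 \<le> s ^ 2" using s2 by (intro power_mono) auto
  hence ne: "s ^ 2 - 1 \<noteq> 0" "s \<noteq> 0" using s2 by auto
  have "real (card P3) * (s ^ 3 - s) = (q - 1) * (q - s)"
  proof -
    have "real (card P3) * (s ^ 3 - s) = (q ^ 2 + (q - 1) * q * s - q) - (real (card P1) + real (card P3)) * s"
      using R2 by (simp add: algebra_simps)
    also have "\<dots> = (q ^ 2 + (q - 1) * q * s - q) - (q ^ 2 - 1) * s" using R1 by simp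
    also have "\<dots> = (q - 1) * (q - s)" by (simp add: algebra_simps power2_eq_square)
    finally show ?thesis .
  qed
  moreover have "s ^ 3 - s = s * (s ^ 2 - 1)" by (simp add: algebra_simps power2_eq_square power3_eq_cube)
  ultimately have n3: "real (card P3) * (s * (s ^ 2 - 1)) = (q - 1) * (q - s)" by simp
  show P3: "real (card P3) = (q - 1) * (q / s - 1) / (s ^ 2 - 1)"
  proof -
    have "(q - 1) * (q / s - 1) / (s ^ 2 - 1) = (q - 1) * (q - s) / (s * (s ^ 2 - 1))"
      using ne by (simp add: field_simps)
    also have "\<dots> = real (card P3)" using n3 ne by (simp add: divide_eq_eq)
    finally show ?thesis by simp
  qed
  show "real (card P1) = (q - 1) * (q * s ^ 2 - q - q / s + s ^ 2) / (s ^ 2 - 1)"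
  proof -
    have "real (card P1) = q ^ 2 - 1 - real (card P3)" using R1 by simp
    also have "\<dots> = (q - 1) * (q * s ^ 2 - q - q / s + s ^ 2) / (s ^ 2 - 1)"
      unfolding P3 using ne(1,2) by (simp add: field_simps) (simp add: algebra_simps power2_eq_square)
    finally show ?thesis .
  qed
qed

lemma main:
  defines "S \<equiv> (\<lambda>(a::'a, b::'a, c::'a). S_sum n k a b c)"
    and "wt \<equiv> (\<lambda>(a::'a, b::'a, c::'a). cw_weight n k p a b c)"
  shows
    "(\<forall>t. S t \<in> {2 ^ ((n + d) div 2), - (2 ^ ((n + d) div 2)),
                  2 ^ ((n + 3*d) div 2), - (2 ^ ((n + 3*d) div 2)), 0, 2 ^ n})
   \<and> (\<forall>t. int (wt t) = 2 ^ (n - 1) - S t div 2)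
   \<and> real (card {t. S t = 2 ^ ((n + d) div 2)})
       = (2 ^ (n - d - 1) + 2 ^ ((n - d - 2) div 2)) * (2 ^ n - 1)
         * (2 ^ (n + 2*d) - 2 ^ n - 2 ^ (n - d) + 2 ^ (2*d)) / (2 ^ (2*d) - 1)
   \<and> real (card {t. wt t = 2 ^ (n - 1) - 2 ^ ((n + d - 2) div 2)})
       = (2 ^ (n - d - 1) + 2 ^ ((n - d - 2) div 2)) * (2 ^ n - 1)
         * (2 ^ (n + 2*d) - 2 ^ n - 2 ^ (n - d) + 2 ^ (2*d)) / (2 ^ (2*d) - 1)
   \<and> real (card {t. S t = - (2 ^ ((n + d) div 2))})
       = (2 ^ (n - d - 1) - 2 ^ ((n - d - 2) div 2)) * (2 ^ n - 1)
         * (2 ^ (n + 2*d) - 2 ^ n - 2 ^ (n - d) + 2 ^ (2*d)) / (2 ^ (2*d) - 1)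
   \<and> real (card {t. wt t = 2 ^ (n - 1) + 2 ^ ((n + d - 2) div 2)})
       = (2 ^ (n - d - 1) - 2 ^ ((n - d - 2) div 2)) * (2 ^ n - 1)
         * (2 ^ (n + 2*d) - 2 ^ n - 2 ^ (n - d) + 2 ^ (2*d)) / (2 ^ (2*d) - 1)
   \<and> real (card {t. S t = 2 ^ ((n + 3*d) div 2)})
       = (2 ^ (n - 3*d - 1) + 2 ^ ((n - 3*d - 2) div 2)) * (2 ^ (n - d) - 1)
         * (2 ^ n - 1) / (2 ^ (2*d) - 1)
   \<and> real (card {t. wt t = 2 ^ (n - 1) - 2 ^ ((n + 3*d - 2) div 2)})
       = (2 ^ (n - 3*d - 1) + 2 ^ ((n - 3*d - 2) div 2)) * (2 ^ (n - d) - 1)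
         * (2 ^ n - 1) / (2 ^ (2*d) - 1)
   \<and> real (card {t. S t = - (2 ^ ((n + 3*d) div 2))})
       = (2 ^ (n - 3*d - 1) - 2 ^ ((n - 3*d - 2) div 2)) * (2 ^ (n - d) - 1)
         * (2 ^ n - 1) / (2 ^ (2*d) - 1)
   \<and> real (card {t. wt t = 2 ^ (n - 1) + 2 ^ ((n + 3*d - 2) div 2)})
       = (2 ^ (n - 3*d - 1) - 2 ^ ((n - 3*d - 2) div 2)) * (2 ^ (n - d) - 1)
         * (2 ^ n - 1) / (2 ^ (2*d) - 1)
   \<and> real (card {t. S t = 0})
       = (2 ^ n - 1) * (2 ^ (2*n) - 2 ^ (2*n - d) + 2 ^ (2*n - 4*d) + 2 ^ n
                         - 2 ^ (n - d) - 2 ^ (n - 3*d) + 1)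
   \<and> real (card {t. wt t = 2 ^ (n - 1)})
       = (2 ^ n - 1) * (2 ^ (2*n) - 2 ^ (2*n - d) + 2 ^ (2*n - 4*d) + 2 ^ n
                         - 2 ^ (n - d) - 2 ^ (n - 3*d) + 1)
   \<and> card {t. S t = 2 ^ n} = 1
   \<and> card {t. wt t = 0} = 1"
proof -
  have S_eq: "S t = SS3 t" for t unfolding S_def by (cases t) (simp add: S_sum_SS)
  have wt_eq: "int (wt t) = 2 ^ (n - 1) - S t div 2" for t
    unfolding wt_def S_eq by (cases t) (simp add: weight)
  have e1: "(n + d) div 2 = d + h1" "(n + 3 * d) div 2 = 3 * d + h3" using h_facts by simp_all
  have hf: "n = d + 2 * h1" "n = 3 * d + 2 * h3" "h1 \<ge> 1" "h3 \<ge> 1" using h_facts by simp_all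
  have vals: "S t \<in> {v1, - v1, v3, - v3, 0, 2 ^ n}" for t using SS_vals S_eq by simp
  have ev2: "even ((2::int) ^ j)" if "j \<ge> 1" for j using that by (cases j) auto
  have ev: "S t = 2 * (S t div 2)" for t
  proof -
    have "even (S t)" using vals[of t] ev2[of "d + h1"] ev2[of "3 * d + h3"] ev2[of n] hf n_pos by auto
    thus ?thesis by simp
  qed
  have q2: "(2::int) ^ n = 2 * 2 ^ (n - 1)" using n_pos by (simp add: power_Suc[symmetric] del: power_Suc)
  have wt_iff: "(wt t = X) \<longleftrightarrow> (S t = 2 ^ n - 2 * int X)" for t X
  proof -
    have "(wt t = X) \<longleftrightarrow> int (wt t) = int X" by simp
    also have "\<dots> \<longleftrightarrow> 2 ^ (n - 1) - S t div 2 = int X" by (simp add: wt_eq)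
    also have "\<dots> \<longleftrightarrow> 2 * (S t div 2) = 2 ^ n - 2 * int X" using q2 by auto
    also have "\<dots> \<longleftrightarrow> S t = 2 ^ n - 2 * int X" using ev[of t] by auto
    finally show ?thesis .
  qed
  have cardS: "card {t. S t = u} = card {t. SS3 t = u}" for u by (simp add: S_eq)
  have x5: "(n + d - 2) div 2 = d + h1 - 1" and x6: "(n + 3 * d - 2) div 2 = 3 * d + h3 - 1"
    using hf by simp_all
  have le1: "(2::nat) ^ (d + h1 - 1) \<le> 2 ^ (n - 1)" and le3: "(2::nat) ^ (3 * d + h3 - 1) \<le> 2 ^ (n - 1)"
    using hf by (intro power_increasing; simp)+
  have w1: "2 ^ n - 2 * int (2 ^ (n - 1) - 2 ^ ((n + d - 2) div 2)) = v1"
  proof -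
    have "int (2 ^ (n - 1) - 2 ^ ((n + d - 2) div 2)) = 2 ^ (n - 1) - 2 ^ (d + h1 - 1)"
      using le1 x5 by (simp add: of_nat_diff)
    moreover have "(2::int) ^ (d + h1) = 2 * 2 ^ (d + h1 - 1)"
      using hf by (simp add: power_Suc[symmetric] del: power_Suc)
    ultimately show ?thesis using q2 by simp
  qed
  have w2: "2 ^ n - 2 * int (2 ^ (n - 1) + 2 ^ ((n + d - 2) div 2)) = - v1"
  proof -
    have "int (2 ^ (n - 1) + 2 ^ ((n + d - 2) div 2)) = 2 ^ (n - 1) + 2 ^ (d + h1 - 1)"
      using x5 by simp
    moreover have "(2::int) ^ (d + h1) = 2 * 2 ^ (d + h1 - 1)"
      using hf by (simp add: power_Suc[symmetric] del: power_Suc)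
    ultimately show ?thesis using q2 by simp
  qed
  have w3: "2 ^ n - 2 * int (2 ^ (n - 1) - 2 ^ ((n + 3 * d - 2) div 2)) = v3"
  proof -
    have "int (2 ^ (n - 1) - 2 ^ ((n + 3 * d - 2) div 2)) = 2 ^ (n - 1) - 2 ^ (3 * d + h3 - 1)"
      using le3 x6 by (simp add: of_nat_diff)
    moreover have "(2::int) ^ (3 * d + h3) = 2 * 2 ^ (3 * d + h3 - 1)"
      using hf by (simp add: power_Suc[symmetric] del: power_Suc)
    ultimately show ?thesis using q2 by simp
  qed
  have w4: "2 ^ n - 2 * int (2 ^ (n - 1) + 2 ^ ((n + 3 * d - 2) div 2)) = - v3"
  proof -
    have "int (2 ^ (n - 1) + 2 ^ ((n + 3 * d - 2) div 2)) = 2 ^ (n - 1) + 2 ^ (3 * d + h3 - 1)"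
      using x6 by simp
    moreover have "(2::int) ^ (3 * d + h3) = 2 * 2 ^ (3 * d + h3 - 1)"
      using hf by (simp add: power_Suc[symmetric] del: power_Suc)
    ultimately show ?thesis using q2 by simp
  qed
  have w5: "2 ^ n - 2 * int (2 ^ (n - 1)) = 0" using q2 by simp
  have w6: "2 ^ n - 2 * int 0 = 2 ^ n" by simp
  define q where "q = (2::real) ^ n"
  define s where "s = (2::real) ^ d"
  have rc: "real (card P3) = (q - 1) * (q / s - 1) / (s ^ 2 - 1)"
     "real (card P1) = (q - 1) * (q * s ^ 2 - q - q / s + s ^ 2) / (s ^ 2 - 1)"
    using real_counts by (simp_all add: q_def s_def)
  have x1: "n - d - 1 = 2 * h1 - 1" "(n - d - 2) div 2 = h1 - 1"
    "n - 3 * d - 1 = 2 * h3 - 1" "(n - 3 * d - 2) div 2 = h3 - 1" using hf by simp_all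
  have dn: "d \<le> n" "3 * d \<le> n" "d \<le> 2 * n" "4 * d \<le> 2 * n" using hf by simp_all
  have p1: "(2::real) ^ (n + 2 * d) = q * s ^ 2" by (simp add: q_def s_def power_add power_mult mult.commute)
  have p2: "(2::real) ^ (n - d) = q / s" using dn by (simp add: q_def s_def power_diff)
  have p3: "(2::real) ^ (2 * d) = s ^ 2" by (simp add: s_def power_mult mult.commute)
  have p4: "(2::real) ^ (2 * n) = q ^ 2" by (simp add: q_def power_mult mult.commute)
  have p5: "(2::real) ^ (2 * n - d) = q ^ 2 / s" using dn p4 by (simp add: s_def power_diff)
  have p6: "(2::real) ^ (2 * n - 4 * d) = q ^ 2 / s ^ 4" using dn p4
    by (simp add: s_def power_diff power_mult[symmetric] mult.commute)
  have p7: "(2::real) ^ (n - 3 * d) = q / s ^ 3" using dn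
    by (simp add: q_def s_def power_diff power_mult[symmetric] mult.commute)
  have p8: "(2::real) ^ (2 * h1) = q / s" using p2 hf by (metis add_diff_cancel_left')
  have p9: "(2::real) ^ (2 * h3) = q / s ^ 3" using p7 hf by (metis add_diff_cancel_left')
  have sne: "s ^ 2 - 1 \<noteq> 0" "s \<noteq> 0"
  proof -
    have "(2::real) ^ 1 \<le> 2 ^ d" using d_pos by (intro power_increasing) auto
    hence s2: "s \<ge> 2" unfolding s_def by simp
    have "(2::real) ^ 2 \<le> s ^ 2" using s2 by (intro power_mono) auto
    thus "s ^ 2 - 1 \<noteq> 0" "s \<noteq> 0" using s2 by auto
  qed
  have c1: "real (card {t. S t = v1}) = real (card P1) * (2 ^ (2 * h1 - 1) + 2 ^ (h1 - 1))"
    using arg_cong[OF cnt_v1, of real_of_int] by (simp add: cardS)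
  have c2: "real (card {t. S t = - v1}) = real (card P1) * (2 ^ (2 * h1 - 1) - 2 ^ (h1 - 1))"
    using arg_cong[OF cnt_mv1, of real_of_int] by (simp add: cardS)
  have c3: "real (card {t. S t = v3}) = real (card P3) * (2 ^ (2 * h3 - 1) + 2 ^ (h3 - 1))"
    using arg_cong[OF cnt_v3, of real_of_int] by (simp add: cardS)
  have c4: "real (card {t. S t = - v3}) = real (card P3) * (2 ^ (2 * h3 - 1) - 2 ^ (h3 - 1))"
    using arg_cong[OF cnt_mv3, of real_of_int] by (simp add: cardS)
  have c5: "real (card {t. S t = 0}) = (q - 1) + real (card P1) * (q - q / s) + real (card P3) * (q - q / s ^ 3)"
  proof -
    have "real (card {t. S t = 0}) = (2 ^ n - 1) + real (card P1) * (2 ^ n - 2 ^ (2 * h1)) + real (card P3) * (2 ^ n - 2 ^ (2 * h3))"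
      using arg_cong[OF cnt_0, of real_of_int] by (simp add: cardS)
    thus ?thesis by (simp add: p8 p9 q_def)
  qed
  have c6: "card {t. S t = 2 ^ n} = 1" using cnt_q by (simp add: cardS)
  have r1: "real (card {t. S t = v1}) = (2 ^ (n - d - 1) + 2 ^ ((n - d - 2) div 2)) * (2 ^ n - 1)
         * (2 ^ (n + 2*d) - 2 ^ n - 2 ^ (n - d) + 2 ^ (2*d)) / (2 ^ (2*d) - 1)"
    unfolding c1 x1 p1 p2 p3 rc q_def[symmetric] using sne by (simp add: field_simps)
  have r2: "real (card {t. S t = - v1}) = (2 ^ (n - d - 1) - 2 ^ ((n - d - 2) div 2)) * (2 ^ n - 1)
         * (2 ^ (n + 2*d) - 2 ^ n - 2 ^ (n - d) + 2 ^ (2*d)) / (2 ^ (2*d) - 1)"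
    unfolding c2 x1 p1 p2 p3 rc q_def[symmetric] using sne by (simp add: field_simps)
  have r3: "real (card {t. S t = v3}) = (2 ^ (n - 3*d - 1) + 2 ^ ((n - 3*d - 2) div 2)) * (2 ^ (n - d) - 1)
         * (2 ^ n - 1) / (2 ^ (2*d) - 1)"
    unfolding c3 x1 p2 p3 rc q_def[symmetric] using sne by (simp add: field_simps)
  have r4: "real (card {t. S t = - v3}) = (2 ^ (n - 3*d - 1) - 2 ^ ((n - 3*d - 2) div 2)) * (2 ^ (n - d) - 1)
         * (2 ^ n - 1) / (2 ^ (2*d) - 1)"
    unfolding c4 x1 p2 p3 rc q_def[symmetric] using sne by (simp add: field_simps)
  have r5: "real (card {t. S t = 0}) = (2 ^ n - 1) * (2 ^ (2*n) - 2 ^ (2*n - d) + 2 ^ (2*n - 4*d) + 2 ^ n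
                         - 2 ^ (n - d) - 2 ^ (n - 3*d) + 1)"
    unfolding c5 p4 p5 p6 p2 p7 rc q_def[symmetric] by (rule t3'[OF sne])
  show ?thesis
    unfolding e1 wt_iff w1 w2 w3 w4 w5 w6
    using vals r1 r2 r3 r4 r5 c6 wt_eq by simp
qed

end

theorem theorem5:
  fixes n k d :: nat and p :: "'a::{field,finite}"
  assumes n_pos: "0 < n"
    and card_q: "CARD('a) = 2 ^ n"
    and k_range: "1 \<le> k" "k \<le> n - 1"
    and k_not: "3 * k \<noteq> n" "3 * k \<noteq> 2 * n"
    and d_def: "d = gcd n k"
    and odd_nd: "odd (n div d)"
    and prim: "primitive_elem p"
  defines "S \<equiv> (\<lambda>(a::'a, b::'a, c::'a). S_sum n k a b c)"
    and "wt \<equiv> (\<lambda>(a::'a, b::'a, c::'a). cw_weight n k p a b c)"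
  shows
    "(\<forall>t. S t \<in> {2 ^ ((n + d) div 2), - (2 ^ ((n + d) div 2)),
                  2 ^ ((n + 3*d) div 2), - (2 ^ ((n + 3*d) div 2)), 0, 2 ^ n})
   \<and> (\<forall>t. int (wt t) = 2 ^ (n - 1) - S t div 2)
   \<and> real (card {t. S t = 2 ^ ((n + d) div 2)})
       = (2 ^ (n - d - 1) + 2 ^ ((n - d - 2) div 2)) * (2 ^ n - 1)
         * (2 ^ (n + 2*d) - 2 ^ n - 2 ^ (n - d) + 2 ^ (2*d)) / (2 ^ (2*d) - 1)
   \<and> real (card {t. wt t = 2 ^ (n - 1) - 2 ^ ((n + d - 2) div 2)})
       = (2 ^ (n - d - 1) + 2 ^ ((n - d - 2) div 2)) * (2 ^ n - 1)
         * (2 ^ (n + 2*d) - 2 ^ n - 2 ^ (n - d) + 2 ^ (2*d)) / (2 ^ (2*d) - 1)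
   \<and> real (card {t. S t = - (2 ^ ((n + d) div 2))})
       = (2 ^ (n - d - 1) - 2 ^ ((n - d - 2) div 2)) * (2 ^ n - 1)
         * (2 ^ (n + 2*d) - 2 ^ n - 2 ^ (n - d) + 2 ^ (2*d)) / (2 ^ (2*d) - 1)
   \<and> real (card {t. wt t = 2 ^ (n - 1) + 2 ^ ((n + d - 2) div 2)})
       = (2 ^ (n - d - 1) - 2 ^ ((n - d - 2) div 2)) * (2 ^ n - 1)
         * (2 ^ (n + 2*d) - 2 ^ n - 2 ^ (n - d) + 2 ^ (2*d)) / (2 ^ (2*d) - 1)
   \<and> real (card {t. S t = 2 ^ ((n + 3*d) div 2)})
       = (2 ^ (n - 3*d - 1) + 2 ^ ((n - 3*d - 2) div 2)) * (2 ^ (n - d) - 1)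
         * (2 ^ n - 1) / (2 ^ (2*d) - 1)
   \<and> real (card {t. wt t = 2 ^ (n - 1) - 2 ^ ((n + 3*d - 2) div 2)})
       = (2 ^ (n - 3*d - 1) + 2 ^ ((n - 3*d - 2) div 2)) * (2 ^ (n - d) - 1)
         * (2 ^ n - 1) / (2 ^ (2*d) - 1)
   \<and> real (card {t. S t = - (2 ^ ((n + 3*d) div 2))})
       = (2 ^ (n - 3*d - 1) - 2 ^ ((n - 3*d - 2) div 2)) * (2 ^ (n - d) - 1)
         * (2 ^ n - 1) / (2 ^ (2*d) - 1)
   \<and> real (card {t. wt t = 2 ^ (n - 1) + 2 ^ ((n + 3*d - 2) div 2)})
       = (2 ^ (n - 3*d - 1) - 2 ^ ((n - 3*d - 2) div 2)) * (2 ^ (n - d) - 1)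
         * (2 ^ n - 1) / (2 ^ (2*d) - 1)
   \<and> real (card {t. S t = 0})
       = (2 ^ n - 1) * (2 ^ (2*n) - 2 ^ (2*n - d) + 2 ^ (2*n - 4*d) + 2 ^ n
                         - 2 ^ (n - d) - 2 ^ (n - 3*d) + 1)
   \<and> real (card {t. wt t = 2 ^ (n - 1)})
       = (2 ^ n - 1) * (2 ^ (2*n) - 2 ^ (2*n - d) + 2 ^ (2*n - 4*d) + 2 ^ n
                         - 2 ^ (n - d) - 2 ^ (n - 3*d) + 1)
   \<and> card {t. S t = 2 ^ n} = 1
   \<and> card {t. wt t = 0} = 1"
proof -
  interpret G: gfkp n p k d "n div d"
    by unfold_locales (use n_pos card_q k_range k_not d_def odd_nd prim in auto)
  show ?thesis unfolding S_def wt_def by (rule G.main)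
qed

end
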